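(* Let $d,r:\mathbb{N}\to\mathbb{N}$ be functions such that $d$ is nondecreasing, takes only prime values at least $5$, $r$ is strictly increasing, and $3r(n)\le d(n)$ for all $n$. Let $\alpha_n=(1\;2\;\cdots\;d(n))$, $\beta_n=(1\;(1+r(n))\;(1+2r(n)))\in\mathrm{Alt}(d(n))$, $\alpha=(\alpha_n)_n$, $\beta=(\beta_n)_n\in\prod_n\mathrm{Alt}(d(n))$, and $G=\langle\alpha,\beta\rangle$. Let $L_\infty$ be the normal closure of $\beta$ in $G$. Then there is a surjective homomorphism $\tau:G\to W$ with $\tau(\alpha)=a$, $\tau(\beta)=b_0$; its kernel is $\ker\tau=\bigoplus_n\mathrm{Alt}(d(n))\le\prod_n\mathrm{Alt}(d(n))$ (in particular $\bigoplus_n\mathrm{Alt}(d(n))\le G$), and $\ker\tau\le L_\infty$.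
   Context: $\mathbb{N}=\{1,2,\dots\}$. $W=C_3\wr\mathbb{Z}=\bigoplus_{\mathbb{Z}}C_3\rtimes\mathbb{Z}$ (the lamplighter group), where $\mathbb{Z}=\langle a\rangle$ acts by shifting coordinates; $b_n$ generates the copy of $C_3$ at coordinate $n$, so $a^nb_ma^{-n}=b_{m+n}$. $\bigoplus_n\mathrm{Alt}(d(n))$ denotes the subgroup of the direct product consisting of elements with finitely many nontrivial coordinates. *)

theory Defs
  imports "HOL-Algebra.Algebra" "HOL-Combinatorics.Cycles"
begin

text \<open>An element (f,k) stands for
  (prod_m b_m^(f m)) a^k, with f finitely supported with values in {0,1,2}
  (representing C_3 = Z/3Z) and a acting by shifting coordinates.\<close>
definition lamplighter3 :: "((int \<Rightarrow> int) \<times> int) monoid" where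
  "lamplighter3 = \<lparr> carrier = {(f, k). (\<forall>m. f m \<in> {0, 1, 2}) \<and> finite {m. f m \<noteq> 0}},
      monoid.mult = (\<lambda>(f, k) (g, l). (\<lambda>m. (f m + g (m - k)) mod 3, k + l)),
      one = (\<lambda>_. 0, 0) \<rparr>"

definition lamp_a :: "(int \<Rightarrow> int) \<times> int" where
  "lamp_a = (\<lambda>_. 0, 1)"

definition lamp_b :: "int \<Rightarrow> (int \<Rightarrow> int) \<times> int" where
  "lamp_b n = (\<lambda>m. if m = n then 1 else 0, 0)"

definition normal_closure :: "('a, 'b) monoid_scheme \<Rightarrow> 'a set \<Rightarrow> 'a set" where
  "normal_closure G S = generate G (\<Union>g\<in>carrier G. (\<lambda>s. g \<otimes>\<^bsub>G\<^esub> s \<otimes>\<^bsub>G\<^esub> inv\<^bsub>G\<^esub> g) ` S)"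

abbreviation posnat :: "nat set" where "posnat \<equiv> {1..}"

definition prod_alt :: "(nat \<Rightarrow> nat) \<Rightarrow> (nat \<Rightarrow> nat \<Rightarrow> nat) monoid" where
  "prod_alt d = product_group posnat (\<lambda>n. alt_group (d n))"

definition sum_alt :: "(nat \<Rightarrow> nat) \<Rightarrow> (nat \<Rightarrow> nat \<Rightarrow> nat) monoid" where
  "sum_alt d = sum_group posnat (\<lambda>n. alt_group (d n))"

definition alpha_seq :: "(nat \<Rightarrow> nat) \<Rightarrow> nat \<Rightarrow> nat \<Rightarrow> nat" where
  "alpha_seq d = (\<lambda>n\<in>posnat. cycle_of_list [1..<d n + 1])"

definition beta_seq :: "(nat \<Rightarrow> nat) \<Rightarrow> nat \<Rightarrow> nat \<Rightarrow> nat" where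
  "beta_seq r = (\<lambda>n\<in>posnat. cycle_of_list [1, 1 + r n, 1 + 2 * r n])"

end

theory Submission
  imports Defs
begin

lemma lamp_carrier: "x \<in> carrier lamplighter3 \<longleftrightarrow> (\<forall>m. fst x m \<in> {0,1,2}) \<and> finite {m. fst x m \<noteq> 0}"
  by (cases x) (simp add: lamplighter3_def)

lemma lamp_mult: "(f, k) \<otimes>\<^bsub>lamplighter3\<^esub> (g, l) = (\<lambda>m. (f m + g (m - k)) mod 3, k + l)"
  by (simp add: lamplighter3_def)

lemma lamp_one: "\<one>\<^bsub>lamplighter3\<^esub> = (\<lambda>_. 0, 0)"
  by (simp add: lamplighter3_def)

lemma mod3_range: "(x::int) mod 3 \<in> {0,1,2}"
proof -
  have "0 \<le> x mod 3" "x mod 3 < 3" by auto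
  then show ?thesis by auto
qed

lemma mod3_id: "(x::int) \<in> {0,1,2} \<Longrightarrow> x mod 3 = x" by auto

lemma lamp_group: "group lamplighter3"
proof (rule groupI)
  fix x y assume x: "x \<in> carrier lamplighter3" and y: "y \<in> carrier lamplighter3"
  obtain f k where xf: "x = (f,k)" by (cases x)
  obtain g l where yg: "y = (g,l)" by (cases y)
  have fs: "finite {m. f m \<noteq> 0}" and gs: "finite {m. g m \<noteq> 0}" using x y xf yg by (auto simp: lamp_carrier)
  have "finite ((\<lambda>m. m + k) ` {m. g m \<noteq> 0})" using gs by simp
  moreover have "{m. (f m + g (m - k)) mod 3 \<noteq> 0} \<subseteq> {m. f m \<noteq> 0} \<union> (\<lambda>m. m + k) ` {m. g m \<noteq> 0}"
  proof
    fix m assume "m \<in> {m. (f m + g (m - k)) mod 3 \<noteq> 0}"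
    then have "f m \<noteq> 0 \<or> g (m - k) \<noteq> 0" by auto
    then show "m \<in> {m. f m \<noteq> 0} \<union> (\<lambda>m. m + k) ` {m. g m \<noteq> 0}"
      by (auto intro: image_eqI[where x="m - k"])
  qed
  ultimately have "finite {m. (f m + g (m - k)) mod 3 \<noteq> 0}" using fs by (meson finite_UnI finite_subset)
  then show "x \<otimes>\<^bsub>lamplighter3\<^esub> y \<in> carrier lamplighter3"
    unfolding xf yg lamp_mult lamp_carrier using mod3_range by simp
next
  show "\<one>\<^bsub>lamplighter3\<^esub> \<in> carrier lamplighter3" by (simp add: lamp_one lamp_carrier)
next
  fix x y z assume "x \<in> carrier lamplighter3" "y \<in> carrier lamplighter3" "z \<in> carrier lamplighter3"
  obtain f k where xf: "x = (f,k)" by (cases x)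
  obtain g l where yg: "y = (g,l)" by (cases y)
  obtain h j where zh: "z = (h,j)" by (cases z)
  have "((f m + g (m - k)) mod 3 + h (m - (k + l))) mod 3 = (f m + (g (m - k) + h (m - k - l)) mod 3) mod 3" for m
  proof -
    have "((f m + g (m - k)) mod 3 + h (m - (k + l))) mod 3 = (f m + g (m - k) + h (m - (k + l))) mod 3"
      by (simp add: mod_add_left_eq)
    also have "\<dots> = (f m + (g (m - k) + h (m - k - l))) mod 3"
      by (metis add.assoc diff_diff_eq)
    also have "\<dots> = (f m + (g (m - k) + h (m - k - l)) mod 3) mod 3" by (simp add: mod_add_right_eq)
    finally show ?thesis .
  qed
  note eq = this
  show "x \<otimes>\<^bsub>lamplighter3\<^esub> y \<otimes>\<^bsub>lamplighter3\<^esub> z = x \<otimes>\<^bsub>lamplighter3\<^esub> (y \<otimes>\<^bsub>lamplighter3\<^esub> z)"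
    unfolding xf yg zh lamp_mult prod.inject
  proof
    show "(\<lambda>m. ((f m + g (m - k)) mod 3 + h (m - (k + l))) mod 3) = (\<lambda>m. (f m + (g (m - k) + h (m - k - l)) mod 3) mod 3)"
      by (rule ext) (rule eq)
  qed simp
next
  fix x assume x: "x \<in> carrier lamplighter3"
  obtain f k where xf: "x = (f,k)" by (cases x)
  have "\<And>m. f m \<in> {0,1,2}" using x xf by (auto simp: lamp_carrier)
  then have "\<And>m. f m mod 3 = f m" using mod3_id by blast
  then show "\<one>\<^bsub>lamplighter3\<^esub> \<otimes>\<^bsub>lamplighter3\<^esub> x = x"
    by (simp add: xf lamp_one lamp_mult)
next
  fix x assume x: "x \<in> carrier lamplighter3"
  obtain f k where xf: "x = (f,k)" by (cases x)
  have fs: "finite {m. f m \<noteq> 0}" using x xf by (auto simp: lamp_carrier)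
  have "{m. (- f (m + k)) mod 3 \<noteq> 0} \<subseteq> (\<lambda>m. m - k) ` {m. f m \<noteq> 0}"
  proof
    fix m assume "m \<in> {m. (- f (m + k)) mod 3 \<noteq> 0}"
    then have "f (m + k) \<noteq> 0" by auto
    then show "m \<in> (\<lambda>m. m - k) ` {m. f m \<noteq> 0}" by (auto intro: image_eqI[where x="m + k"])
  qed
  then have fin: "finite {m. (- f (m + k)) mod 3 \<noteq> 0}" using fs by (meson finite_imageI finite_subset)
  have "((- f (m + k)) mod 3 + f (m + k)) mod 3 = 0" for m
    by (simp add: mod_add_left_eq)
  then have "(\<lambda>m. (- f (m + k)) mod 3, - k) \<otimes>\<^bsub>lamplighter3\<^esub> x = \<one>\<^bsub>lamplighter3\<^esub>"
    by (simp add: xf lamp_mult lamp_one)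
  moreover have "(\<lambda>m. (- f (m + k)) mod 3, - k) \<in> carrier lamplighter3"
    unfolding lamp_carrier using fin mod3_range by simp
  ultimately show "\<exists>y\<in>carrier lamplighter3. y \<otimes>\<^bsub>lamplighter3\<^esub> x = \<one>\<^bsub>lamplighter3\<^esub>" by blast
qed


definition win :: "(nat \<Rightarrow> nat) \<Rightarrow> nat \<Rightarrow> int \<Rightarrow> bool" where
  "win r n m \<longleftrightarrow> 2 * \<bar>m\<bar> < int (r n)"

definition rp :: "(nat \<Rightarrow> nat) \<Rightarrow> (nat \<Rightarrow> nat) \<Rightarrow> nat \<Rightarrow> int \<Rightarrow> int \<Rightarrow> int \<Rightarrow> bool" where
  "rp d r n y m i \<longleftrightarrow> win r n m \<and> 0 \<le> i \<and> i < 3 \<and> y mod int (d n) = (m + i * int (r n)) mod int (d n)"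

definition psi :: "(nat \<Rightarrow> nat) \<Rightarrow> (nat \<Rightarrow> nat) \<Rightarrow> nat \<Rightarrow> (int \<Rightarrow> int) \<Rightarrow> int \<Rightarrow> int" where
  "psi d r n f y = (if \<exists>m i. rp d r n y m i then
      (let mi = (SOME mi. rp d r n y (fst mi) (snd mi)) in
        (fst mi + ((snd mi + f (fst mi)) mod 3) * int (r n)) mod int (d n))
    else y mod int (d n))"

definition Phi :: "(nat \<Rightarrow> nat) \<Rightarrow> (nat \<Rightarrow> nat) \<Rightarrow> nat \<Rightarrow> (int \<Rightarrow> int) \<times> int \<Rightarrow> nat \<Rightarrow> nat" where
  "Phi d r n w x = (if 1 \<le> x \<and> x \<le> d n then nat (psi d r n (fst w) (int x - 1 + snd w)) + 1 else x)"

lemma dvd_small_zero: "(p::int) dvd x \<Longrightarrow> \<bar>x\<bar> < p \<Longrightarrow> x = 0"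
proof (rule ccontr)
  assume "p dvd x" "\<bar>x\<bar> < p" "x \<noteq> 0"
  then have "\<bar>p\<bar> \<le> \<bar>x\<bar>" using dvd_imp_le_int by blast
  then show False using \<open>\<bar>x\<bar> < p\<close> by linarith
qed

lemma rp_unique:
  assumes rd: "3 * r n \<le> d n"
    and h1: "rp d r n y m i" and h2: "rp d r n y m' i'"
  shows "m = m' \<and> i = i'"
proof -
  let ?p = "int (d n)" and ?r = "int (r n)"
  have w: "2 * \<bar>m\<bar> < ?r" "2 * \<bar>m'\<bar> < ?r" and i: "0 \<le> i" "i < 3" "0 \<le> i'" "i' < 3"
    using h1 h2 by (auto simp: rp_def win_def)
  have "(m + i * ?r) mod ?p = (m' + i' * ?r) mod ?p" using h1 h2 by (simp add: rp_def)
  then have "?p dvd ((m + i * ?r) - (m' + i' * ?r))" by (simp add: mod_eq_dvd_iff)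
  moreover have "\<bar>(m + i * ?r) - (m' + i' * ?r)\<bar> < ?p"
  proof -
    have a: "\<bar>m - m'\<bar> < ?r" using w by linarith
    have b: "\<bar>(i - i') * ?r\<bar> \<le> 2 * ?r"
    proof -
      have "\<bar>i - i'\<bar> \<le> 2" using i by linarith
      then have "\<bar>i - i'\<bar> * ?r \<le> 2 * ?r" by (intro mult_right_mono) auto
      then show ?thesis by (simp add: abs_mult)
    qed
    have "(m + i * ?r) - (m' + i' * ?r) = (m - m') + (i - i') * ?r" by (simp add: algebra_simps)
    then have "\<bar>(m + i * ?r) - (m' + i' * ?r)\<bar> \<le> \<bar>m - m'\<bar> + \<bar>(i - i') * ?r\<bar>" by simp
    then show ?thesis using a b rd by linarith
  qed
  ultimately have "(m + i * ?r) - (m' + i' * ?r) = 0" by (rule dvd_small_zero)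
  then have z: "(m - m') + (i - i') * ?r = 0" by (simp add: algebra_simps)
  have "i = i'"
  proof (rule ccontr)
    assume "i \<noteq> i'"
    then have "1 \<le> \<bar>i - i'\<bar>" by linarith
    then have "?r \<le> \<bar>i - i'\<bar> * ?r" by (simp add: mult_le_cancel_right1)
    also have "\<dots> = \<bar>(i - i') * ?r\<bar>" by (simp add: abs_mult)
    also have "(i - i') * ?r = - (m - m')" using z by linarith
    also have "\<bar>- (m - m')\<bar> = \<bar>m - m'\<bar>" by simp
    finally show False using w by linarith
  qed
  then show ?thesis using z by simp
qed

lemma rp_mod: "rp d r n (y mod int (d n)) m i = rp d r n y m i"
  by (simp add: rp_def)

lemma rp_cong: "a mod int (d n) = b mod int (d n) \<Longrightarrow> rp d r n a m i = rp d r n b m i"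
  by (simp add: rp_def)

lemma psi_cong: "a mod int (d n) = b mod int (d n) \<Longrightarrow> psi d r n f a = psi d r n f b"
proof -
  assume h: "a mod int (d n) = b mod int (d n)"
  then have "rp d r n a = rp d r n b" by (intro ext) (simp add: rp_def)
  then show ?thesis using h by (simp add: psi_def)
qed

lemma psi_E1:
  assumes rd: "3 * r n \<le> d n" and h: "rp d r n y m i"
  shows "psi d r n f y = (m + ((i + f m) mod 3) * int (r n)) mod int (d n)"
proof -
  have ex: "\<exists>mi. rp d r n y (fst mi) (snd mi)" using h by (intro exI[where x="(m,i)"]) simp
  define mi where "mi = (SOME mi. rp d r n y (fst mi) (snd mi))"
  have "rp d r n y (fst mi) (snd mi)" unfolding mi_def using someI_ex[OF ex] .
  then have "fst mi = m \<and> snd mi = i" using rp_unique[OF rd _ h] by blast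
  then show ?thesis using h unfolding psi_def mi_def[symmetric] by auto
qed

lemma psi_E2:
  assumes rd: "3 * r n \<le> d n" and h: "\<And>m i. rp d r n y m i \<Longrightarrow> f m mod 3 = 0"
  shows "psi d r n f y = y mod int (d n)"
proof (cases "\<exists>m i. rp d r n y m i")
  case True
  then obtain m i where mi: "rp d r n y m i" by blast
  have i: "0 \<le> i" "i < 3" using mi by (auto simp: rp_def)
  have "(i + f m) mod 3 = (i + f m mod 3) mod 3" by (simp add: mod_add_right_eq)
  also have "\<dots> = i" using h[OF mi] i by simp
  finally have "(i + f m) mod 3 = i" .
  then have "psi d r n f y = (m + i * int (r n)) mod int (d n)" using psi_E1[where d=d and r=r and n=n, OF rd mi] by simp
  also have "\<dots> = y mod int (d n)" using mi by (simp add: rp_def)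
  finally show ?thesis .
next
  case False
  then show ?thesis by (simp add: psi_def)
qed

lemma psi_range: "0 < d n \<Longrightarrow> 0 \<le> psi d r n f y \<and> psi d r n f y < int (d n)"
  by (simp add: psi_def Let_def)

lemma psi_mod_self: "0 < d n \<Longrightarrow> psi d r n f y mod int (d n) = psi d r n f y"
  using psi_range[of d n r f y] by simp

lemma psi_L1:
  assumes rd: "3 * r n \<le> d n" and dpos: "0 < d n"
  shows "psi d r n f (psi d r n g y) = psi d r n (\<lambda>m. (f m + g m) mod 3) y"
proof (cases "\<exists>m i. rp d r n y m i")
  case True
  then obtain m i where mi: "rp d r n y m i" by blast
  define j where "j = (i + g m) mod 3"
  have g: "psi d r n g y = (m + j * int (r n)) mod int (d n)" using psi_E1[where d=d and r=r and n=n, OF rd mi] j_def by simp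
  have "rp d r n (psi d r n g y) m j" using mi unfolding g rp_def j_def by simp
  then have "psi d r n f (psi d r n g y) = (m + ((j + f m) mod 3) * int (r n)) mod int (d n)"
    using psi_E1[where d=d and r=r and n=n, OF rd] by blast
  moreover have "psi d r n (\<lambda>m. (f m + g m) mod 3) y = (m + ((i + (f m + g m) mod 3) mod 3) * int (r n)) mod int (d n)"
    using psi_E1[where d=d and r=r and n=n, OF rd mi] by simp
  moreover have "(j + f m) mod 3 = (i + (f m + g m) mod 3) mod 3"
  proof -
    have "(j + f m) mod 3 = (i + g m + f m) mod 3" unfolding j_def by (simp add: mod_add_left_eq)
    also have "\<dots> = (i + (f m + g m)) mod 3" by (simp add: algebra_simps)
    also have "\<dots> = (i + (f m + g m) mod 3) mod 3" by (simp add: mod_add_right_eq)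
    finally show ?thesis .
  qed
  ultimately show ?thesis by simp
next
  case False
  have g: "psi d r n g y = y mod int (d n)" using False by (intro psi_E2[where d=d and r=r and n=n, OF rd]) auto
  have "psi d r n f (y mod int (d n)) = psi d r n f y" by (rule psi_cong) simp
  also have "\<dots> = y mod int (d n)" using False by (intro psi_E2[where d=d and r=r and n=n, OF rd]) auto
  finally show ?thesis unfolding g using False by (metis psi_E2[where d=d and r=r and n=n, OF rd])
qed

lemma psi_L2:
  assumes rd: "3 * r n \<le> d n" and dpos: "0 < d n"
    and cond: "\<And>m. g m mod 3 \<noteq> 0 \<Longrightarrow> win r n m \<and> win r n (m + k)"
  shows "psi d r n (\<lambda>m. g (m - k)) (y + k) = (psi d r n g y + k) mod int (d n)"
proof (cases "\<exists>m i. rp d r n y m i \<and> g m mod 3 \<noteq> 0")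
  case True
  then obtain m i where mi: "rp d r n y m i" and gm: "g m mod 3 \<noteq> 0" by blast
  have "win r n (m + k)" using cond[OF gm] by simp
  then have "rp d r n (y + k) (m + k) i" using mi unfolding rp_def
    by (metis add.commute add.left_commute mod_add_right_eq)
  then have A: "psi d r n (\<lambda>m. g (m - k)) (y + k) = (m + k + ((i + g m) mod 3) * int (r n)) mod int (d n)"
    using psi_E1[where d=d and r=r and n=n, OF rd] by fastforce
  have "psi d r n g y = (m + ((i + g m) mod 3) * int (r n)) mod int (d n)"
    using psi_E1[where d=d and r=r and n=n, OF rd mi] .
  then have "(psi d r n g y + k) mod int (d n) = ((m + ((i + g m) mod 3) * int (r n)) mod int (d n) + k) mod int (d n)"
    by simp
  also have "\<dots> = (m + ((i + g m) mod 3) * int (r n) + k) mod int (d n)" by (simp add: mod_add_left_eq)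
  also have "m + ((i + g m) mod 3) * int (r n) + k = m + k + ((i + g m) mod 3) * int (r n)" by simp
  finally show ?thesis using A by simp
next
  case False
  then have g: "psi d r n g y = y mod int (d n)" by (intro psi_E2[where d=d and r=r and n=n, OF rd]) auto
  have "psi d r n (\<lambda>m. g (m - k)) (y + k) = (y + k) mod int (d n)"
  proof (rule psi_E2[where d=d and r=r and n=n, OF rd])
    fix m' i' assume h: "rp d r n (y + k) m' i'"
    show "g (m' - k) mod 3 = 0"
    proof (rule ccontr)
      assume ne: "g (m' - k) mod 3 \<noteq> 0"
      then have "win r n (m' - k)" using cond by blast
      moreover have "y mod int (d n) = (m' - k + i' * int (r n)) mod int (d n)"
      proof -
        have "(y + k) mod int (d n) = (m' + i' * int (r n)) mod int (d n)" using h by (simp add: rp_def)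
        then have "(y + k - k) mod int (d n) = (m' + i' * int (r n) - k) mod int (d n)"
          by (metis mod_diff_left_eq)
        then show ?thesis by (simp add: algebra_simps)
      qed
      ultimately have "rp d r n y (m' - k) i'" using h by (simp add: rp_def)
      then show False using False ne by blast
    qed
  qed
  then show ?thesis unfolding g by (simp add: mod_add_left_eq)
qed

lemma Phi_mult:
  assumes rd: "3 * r n \<le> d n" and dpos: "0 < d n"
    and cond: "\<And>m. g m mod 3 \<noteq> 0 \<Longrightarrow> win r n m \<and> win r n (m + k)"
  shows "Phi d r n (f,k) (Phi d r n (g,l) x) = Phi d r n ((f,k) \<otimes>\<^bsub>lamplighter3\<^esub> (g,l)) x"
proof (cases "1 \<le> x \<and> x \<le> d n")
  case True
  define z where "z = int x - 1 + l"
  have rg: "0 \<le> psi d r n g z" "psi d r n g z < int (d n)" using psi_range[where d=d and n=n, OF dpos] by auto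
  have x1: "Phi d r n (g,l) x = nat (psi d r n g z) + 1" using True by (simp add: Phi_def z_def)
  have in1: "1 \<le> nat (psi d r n g z) + 1 \<and> nat (psi d r n g z) + 1 \<le> d n" using rg by linarith
  have "Phi d r n (f,k) (Phi d r n (g,l) x) = nat (psi d r n f (psi d r n g z + k)) + 1"
    unfolding x1 using in1 rg by (simp add: Phi_def)
  also have "psi d r n f (psi d r n g z + k) = psi d r n f ((psi d r n g z + k) mod int (d n))"
    by (rule psi_cong) simp
  also have "\<dots> = psi d r n f (psi d r n (\<lambda>m. g (m - k)) (z + k))"
    using psi_L2[where d=d and r=r and n=n, OF rd dpos cond] by simp
  also have "\<dots> = psi d r n (\<lambda>m. (f m + g (m - k)) mod 3) (z + k)"
    using psi_L1[where d=d and r=r and n=n, OF rd dpos] by simp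
  finally have L: "Phi d r n (f,k) (Phi d r n (g,l) x) = nat (psi d r n (\<lambda>m. (f m + g (m - k)) mod 3) (z + k)) + 1" .
  have zk: "z + k = int x - 1 + (k + l)" by (simp add: z_def)
  have "Phi d r n ((f,k) \<otimes>\<^bsub>lamplighter3\<^esub> (g,l)) x = nat (psi d r n (\<lambda>m. (f m + g (m - k)) mod 3) (z + k)) + 1"
    unfolding lamp_mult zk using True by (simp add: Phi_def)
  then show ?thesis using L by simp
next
  case False
  have "Phi d r n (g,l) x = x" using False by (auto simp: Phi_def)
  moreover have "Phi d r n (f,k) x = x" using False by (auto simp: Phi_def)
  moreover have "Phi d r n ((f,k) \<otimes>\<^bsub>lamplighter3\<^esub> (g,l)) x = x" using False by (auto simp: Phi_def lamp_mult)
  ultimately show ?thesis by simp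
qed

lemma cyc3_apply:
  assumes "distinct [a,b,c]"
  shows "cycle_of_list [a,b,c] x = (if x = a then b else if x = b then c else if x = c then a else x)"
  using assms by (auto simp: transpose_def)

lemma cycle_range_apply:
  "cycle_of_list [1..<p+1] x = (if 1 \<le> x \<and> x \<le> p then x mod p + 1 else x)"
proof (cases "1 \<le> x \<and> x \<le> p")
  case True
  let ?cs = "[1..<p+1]"
  have "map (cycle_of_list ?cs) ?cs = rotate1 ?cs" using cyclic_rotation[of ?cs 1] by simp
  then have "cycle_of_list ?cs (?cs ! (x - 1)) = rotate1 ?cs ! (x - 1)"
    by (metis True diff_less length_map length_upt less_one add_diff_cancel_right' not_le nth_map zero_less_diff le_trans)
  moreover have "?cs ! (x - 1) = x" using True by (subst nth_upt) auto
  moreover have "rotate1 ?cs ! (x - 1) = ?cs ! (x mod p)"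
  proof -
    have "rotate1 ?cs ! (x - 1) = ?cs ! ((x - 1 + 1) mod length ?cs)"
      using True by (subst nth_rotate1) auto
    then show ?thesis using True by simp
  qed
  moreover have "?cs ! (x mod p) = x mod p + 1" using True by (subst nth_upt) auto
  ultimately show ?thesis using True by simp
next
  case False
  then have "x \<notin> set [1..<p+1]" by auto
  then show ?thesis using False id_outside_supp by metis
qed

lemma nat_int_m1 [simp]: "1 \<le> x \<Longrightarrow> nat (int x - 1) = x - 1"
  by (cases x) auto

lemma psi_zero: "3 * r n \<le> d n \<Longrightarrow> psi d r n (\<lambda>_. 0) y = y mod int (d n)"
  by (rule psi_E2) auto

lemma Phi_one: "3 * r n \<le> d n \<Longrightarrow> Phi d r n (\<lambda>_. 0, 0) = id"
proof
  fix x assume rd: "3 * r n \<le> d n"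
  show "Phi d r n (\<lambda>_. 0, 0) x = id x"
  proof (cases "1 \<le> x \<and> x \<le> d n")
    case True
    then have "(int x - 1) mod int (d n) = int x - 1" by simp
    moreover have "nat (int x - 1) + 1 = x" using True by (cases x) auto
    ultimately show ?thesis using True psi_zero[where d=d and r=r and n=n, OF rd] by (simp add: Phi_def)
  qed (auto simp: Phi_def)
qed

lemma Phi_alpha: "3 * r n \<le> d n \<Longrightarrow> Phi d r n (\<lambda>_. 0, 1) = cycle_of_list [1..<d n + 1]"
proof
  fix x assume rd: "3 * r n \<le> d n"
  show "Phi d r n (\<lambda>_. 0, 1) x = cycle_of_list [1..<d n + 1] x"
  proof (cases "1 \<le> x \<and> x \<le> d n")
    case True
    then have "nat (int x mod int (d n)) = x mod d n" by (simp add: nat_mod_distrib)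
    moreover have "cycle_of_list [1..<d n + 1] x = x mod d n + 1" using cycle_range_apply[of "d n" x] True by simp
    ultimately show ?thesis using True psi_zero[where d=d and r=r and n=n, OF rd] by (simp add: Phi_def)
  next
    case False
    then have "cycle_of_list [1..<d n + 1] x = x" by (simp only: cycle_range_apply False if_False)
    then show ?thesis using False by (auto simp: Phi_def)
  qed
qed

lemma Phi_beta:
  assumes r1: "1 \<le> r n" and rd: "3 * r n \<le> d n"
  shows "Phi d r n (lamp_b 0) = cycle_of_list [1, 1 + r n, 1 + 2 * r n]"
proof
  fix x
  let ?f = "\<lambda>m::int. if m = 0 then 1 else (0::int)"
  let ?R = "int (r n)" and ?p = "int (d n)"
  have dist: "distinct [1, 1 + r n, 1 + 2 * r n]" using r1 by auto
  have lb: "lamp_b 0 = (?f, 0)" by (simp add: lamp_b_def)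
  have key: "Phi d r n (lamp_b 0) (1 + i * r n) = 1 + ((i + 1) mod 3) * r n" if i: "i < 3" for i :: nat
  proof -
    have in1: "1 \<le> 1 + i * r n \<and> 1 + i * r n \<le> d n"
    proof -
      have "i * r n \<le> 2 * r n" using i by (intro mult_right_mono) auto
      then show ?thesis using rd r1 by linarith
    qed
    have rp: "rp d r n (int i * ?R) 0 (int i)" using i r1 by (simp add: rp_def win_def)
    have "psi d r n ?f (int i * ?R) = (0 + ((int i + ?f 0) mod 3) * ?R) mod ?p"
      using psi_E1[where d=d and r=r and n=n and f="?f", OF rd rp] .
    also have "(int i + ?f 0) mod 3 = int ((i + 1) mod 3)" by (simp add: zmod_int add.commute)
    also have "(0 + int ((i + 1) mod 3) * ?R) mod ?p = int ((i + 1) mod 3) * ?R"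
    proof -
      have h: "(i + 1) mod 3 * r n \<le> 2 * r n" by (intro mult_right_mono) auto
      have "(i + 1) mod 3 * r n < d n" using h rd r1 by linarith
      then have "int ((i + 1) mod 3 * r n) < ?p" by linarith
      then have "int ((i + 1) mod 3) * ?R < ?p" by (simp only: of_nat_mult)
      then show ?thesis by simp
    qed
    finally have "psi d r n ?f (int i * ?R) = int ((i + 1) mod 3) * ?R" .
    then show ?thesis using in1 by (simp add: Phi_def lb nat_mult_distrib)
  qed
  show "Phi d r n (lamp_b 0) x = cycle_of_list [1, 1 + r n, 1 + 2 * r n] x"
  proof (cases "x = 1 \<or> x = 1 + r n \<or> x = 1 + 2 * r n")
    case True
    then show ?thesis
    proof (elim disjE)
      assume "x = 1" then show ?thesis using key[of 0] dist by (simp add: cyc3_apply)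
    next
      assume "x = 1 + r n" then show ?thesis using key[of 1] dist by (simp add: cyc3_apply)
    next
      assume "x = 1 + 2 * r n" then show ?thesis using key[of 2] dist by (simp add: cyc3_apply)
    qed
  next
    case False
    then have cyc: "cycle_of_list [1, 1 + r n, 1 + 2 * r n] x = x" using dist by (simp add: cyc3_apply)
    show ?thesis
    proof (cases "1 \<le> x \<and> x \<le> d n")
      case True
      let ?y = "int x - 1"
      have y: "0 \<le> ?y" "?y < ?p" using True by auto
      have "psi d r n ?f ?y = ?y mod ?p"
      proof (rule psi_E2[where d=d and r=r and n=n, OF rd])
        fix m i assume h: "rp d r n ?y m i"
        show "?f m mod 3 = 0"
        proof (rule ccontr)
          assume "?f m mod 3 \<noteq> 0"
          then have m0: "m = 0" by (cases "m = 0") auto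
          have i: "0 \<le> i" "i < 3" using h by (auto simp: rp_def)
          have "i * ?R \<le> 2 * ?R" using i by (intro mult_right_mono) auto
          note a = this
          have b: "3 * ?R \<le> ?p" "1 \<le> ?R" using rd r1 by linarith+
          have "0 \<le> i * ?R" using i by simp
          moreover have "i * ?R < ?p" using a b by linarith
          moreover have "?y mod ?p = (i * ?R) mod ?p" using h m0 by (simp add: rp_def)
          ultimately have "?y = i * ?R" using y by simp
          moreover have "i = 0 \<or> i = 1 \<or> i = 2" using i by auto
          ultimately show False using False by auto
        qed
      qed
      then have "psi d r n ?f ?y = ?y" using y by simp
      then have "Phi d r n (lamp_b 0) x = x" using True by (simp add: Phi_def lb)
      then show ?thesis using cyc by simp
    next
      case False
      then show ?thesis using cyc by (auto simp: Phi_def lb)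
    qed
  qed
qed

lemma Phi_id_imp:
  assumes rd: "3 * r n \<le> d n" and r4: "4 \<le> r n" and kb: "\<bar>k\<bar> < int (d n)"
    and sup: "\<And>m. f m mod 3 \<noteq> 0 \<Longrightarrow> 4 * \<bar>m\<bar> < int (r n)"
    and idp: "\<And>x. Phi d r n (f,k) x = x"
  shows "k = 0 \<and> (\<forall>m. f m mod 3 = 0)"
proof -
  let ?R = "int (r n)" and ?p = "int (d n)"
  have dpos: "0 < d n" using rd r4 by linarith
  define z where "z = ?R div 2"
  have z1: "?R - 1 \<le> 2 * z" "2 * z \<le> ?R" unfolding z_def by linarith+
  have psiz: "psi d r n f z = z mod ?p"
  proof (rule psi_E2[where d=d and r=r and n=n, OF rd])
    fix m i assume h: "rp d r n z m i"
    show "f m mod 3 = 0"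
    proof (rule ccontr)
      assume ne: "f m mod 3 \<noteq> 0"
      have m: "4 * \<bar>m\<bar> < ?R" using sup[OF ne] .
      have i: "0 \<le> i" "i < 3" using h by (auto simp: rp_def)
      have "?p dvd (z - (m + i * ?R))" using h by (simp add: rp_def mod_eq_dvd_iff)
      moreover have a: "0 < z - m" "z - m < ?R" using m z1 r4 by linarith+
      have "z - (m + i * ?R) \<noteq> 0"
      proof
        assume "z - (m + i * ?R) = 0"
        then have "z - m = i * ?R" by simp
        moreover have "i = 0 \<or> i = 1 \<or> i = 2" using i by auto
        ultimately show False using a by auto
      qed
      moreover have "\<bar>z - (m + i * ?R)\<bar> < ?p"
      proof -
        have "i * ?R \<le> 2 * ?R" using i by (intro mult_right_mono) auto
        moreover have "0 \<le> i * ?R" using i by simp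
        ultimately show ?thesis using a rd by linarith
      qed
      ultimately show False using dvd_small_zero by blast
    qed
  qed
  define x where "x = nat ((z - k) mod ?p) + 1"
  have xr: "1 \<le> x \<and> x \<le> d n"
  proof -
    have "0 \<le> (z - k) mod ?p" "(z - k) mod ?p < ?p" using dpos by auto
    then have "nat ((z - k) mod ?p) < d n" by (simp add: nat_less_iff)
    then show ?thesis unfolding x_def by linarith
  qed
  have "Phi d r n (f,k) x = nat (psi d r n f (int x - 1 + k)) + 1" using xr by (simp add: Phi_def)
  also have "int x - 1 + k = (z - k) mod ?p + k" unfolding x_def using dpos by simp
  also have "psi d r n f ((z - k) mod ?p + k) = psi d r n f z"
    by (rule psi_cong) (simp add: mod_add_left_eq)
  finally have "nat (z mod ?p) + 1 = nat ((z - k) mod ?p) + 1" using idp[of x] psiz x_def by simp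
  then have "int (nat (z mod ?p)) = int (nat ((z - k) mod ?p))" by simp
  then have "z mod ?p = (z - k) mod ?p" using dpos by simp
  then have "?p dvd k" by (simp add: mod_eq_dvd_iff)
  then have k0: "k = 0" using dvd_small_zero kb by blast
  have "f m mod 3 = 0" for m
  proof (rule ccontr)
    assume ne: "f m mod 3 \<noteq> 0"
    have m: "4 * \<bar>m\<bar> < ?R" using sup[OF ne] .
    have rp: "rp d r n (m mod ?p) m 0" using m by (simp add: rp_def win_def)
    have ps: "psi d r n f (m mod ?p) = (m + (f m mod 3) * ?R) mod ?p"
      using psi_E1[where d=d and r=r and n=n and f=f, OF rd rp] by simp
    define x where "x = nat (m mod ?p) + 1"
    have xr: "1 \<le> x \<and> x \<le> d n"
    proof -
      have "0 \<le> m mod ?p" "m mod ?p < ?p" using dpos by auto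
      then have "nat (m mod ?p) < d n" by (simp add: nat_less_iff)
      then show ?thesis unfolding x_def by linarith
    qed
    have "Phi d r n (f,k) x = nat (psi d r n f (m mod ?p)) + 1" using xr k0 dpos by (simp add: Phi_def x_def)
    then have "nat ((m + (f m mod 3) * ?R) mod ?p) = nat (m mod ?p)" using idp[of x] ps x_def by simp
    then have "int (nat ((m + (f m mod 3) * ?R) mod ?p)) = int (nat (m mod ?p))" by simp
    then have "(m + (f m mod 3) * ?R) mod ?p = m mod ?p" using dpos by simp
    then have "?p dvd ((f m mod 3) * ?R)" by (simp add: mod_eq_dvd_iff)
    moreover have "0 < (f m mod 3) * ?R" using ne r4 by (simp add: order_le_neq_trans)
    moreover have "(f m mod 3) * ?R < ?p"
    proof -
      have "f m mod 3 \<le> 2" by simp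
      then have "(f m mod 3) * ?R \<le> 2 * ?R" by (intro mult_right_mono) auto
      then show ?thesis using rd r4 by linarith
    qed
    ultimately show False using dvd_small_zero by fastforce
  qed
  then show ?thesis using k0 by simp
qed


lemma evenperm_cycle:
  "distinct cs \<Longrightarrow> cs \<noteq> [] \<Longrightarrow> evenperm (cycle_of_list cs) \<longleftrightarrow> odd (length cs)"
proof (induction cs rule: cycle_of_list.induct)
  case (1 i j cs)
  have "evenperm (cycle_of_list (i # j # cs)) = evenperm (transpose i j \<circ> cycle_of_list (j # cs))" by simp
  also have "\<dots> = (evenperm (transpose i j) = evenperm (cycle_of_list (j # cs)))"
    by (rule evenperm_comp) (auto simp: permutation_of_cycle permutation_swap_id)
  also have "\<dots> = (False = odd (length (j # cs)))" using 1 by (simp add: evenperm_swap)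
  finally show ?case by (simp del: cycle_of_list.simps)
next
  case "2_1" then show ?case by simp
next
  case ("2_2" v) then show ?case by simp
qed

lemma alpha_alt: "1 \<le> p \<Longrightarrow> odd p \<Longrightarrow> cycle_of_list [1..<p+1] \<in> carrier (alt_group p)"
proof -
  assume "1 \<le> p" "odd p"
  moreover have "cycle_of_list [1..<p+1] permutes {1..p}"
    using cycle_permutes[of "[1..<p+1]"] by (metis atLeastLessThanSuc_atLeastAtMost Suc_eq_plus1 set_upt)
  ultimately show ?thesis by (simp add: alt_group_carrier evenperm_cycle del: upt_Suc)
qed

lemma cyc3_alt: "distinct [a,b,c] \<Longrightarrow> {a,b,c} \<subseteq> {1..p} \<Longrightarrow> cycle_of_list [a,b,c] \<in> carrier (alt_group p)"
proof -
  assume h: "distinct [a,b,c]" "{a,b,c} \<subseteq> {1..p}"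
  have "cycle_of_list [a,b,c] permutes {a,b,c}" using cycle_permutes[of "[a,b,c]"] by simp
  then have "cycle_of_list [a,b,c] permutes {1..p}" using h(2) permutes_subset by blast
  moreover have "evenperm (cycle_of_list [a,b,c])" using evenperm_cycle[of "[a,b,c]"] h(1) by simp
  ultimately show ?thesis by (simp add: alt_group_carrier)
qed

locale lampctx =
  fixes d r :: "nat \<Rightarrow> nat"
  assumes d_prime: "\<And>n. n \<ge> 1 \<Longrightarrow> Factorial_Ring.prime (d n) \<and> d n \<ge> 5"
    and r_pos: "\<And>n. n \<ge> 1 \<Longrightarrow> r n \<ge> 1"
    and r_mono: "strict_mono_on posnat r"
    and rd: "\<And>n. n \<ge> 1 \<Longrightarrow> 3 * r n \<le> d n"
begin

abbreviation "PA \<equiv> prod_alt d"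
abbreviation "\<alpha> \<equiv> alpha_seq d"
abbreviation "\<beta> \<equiv> beta_seq r"
abbreviation "GG \<equiv> subgroup_generated PA {\<alpha>, \<beta>}"
abbreviation "W \<equiv> lamplighter3"

lemma d_odd: "n \<ge> 1 \<Longrightarrow> odd (d n)"
proof -
  assume n: "n \<ge> 1"
  have p: "Factorial_Ring.prime (d n)" "d n \<ge> 5" using d_prime[OF n] by auto
  show "odd (d n)" by (rule prime_odd_nat) (use p in auto)
qed

lemma d_pos: "n \<ge> 1 \<Longrightarrow> 0 < d n" using d_prime[of n] by linarith

lemma r_ge: "n \<ge> 1 \<Longrightarrow> n \<le> r n"
proof (induction n)
  case 0 then show ?case by simp
next
  case (Suc n)
  show ?case
  proof (cases "n = 0")
    case True then show ?thesis using r_pos by simp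
  next
    case False
    then have "r n < r (Suc n)" using r_mono by (simp add: strict_mono_on_def)
    then show ?thesis using Suc False by simp
  qed
qed

lemma grp_alt: "group (alt_group m)" by (rule alt_group_is_group)

lemma PA_group: "group PA" unfolding prod_alt_def by (rule product_group) (rule grp_alt)

lemma PA_carrier: "carrier PA = (\<Pi>\<^sub>E n\<in>posnat. carrier (alt_group (d n)))"
  by (simp add: prod_alt_def)

lemma PA_mult: "x \<otimes>\<^bsub>PA\<^esub> y = (\<lambda>n\<in>posnat. x n \<circ> y n)"
  by (simp add: prod_alt_def alt_group_mult)

lemma PA_one: "\<one>\<^bsub>PA\<^esub> = (\<lambda>n\<in>posnat. id)"
  by (simp add: prod_alt_def alt_group_one)

lemma PA_inv: "x \<in> carrier PA \<Longrightarrow> inv\<^bsub>PA\<^esub> x = (\<lambda>n\<in>posnat. inv' (x n))"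
proof -
  assume x: "x \<in> carrier PA"
  then have "inv\<^bsub>PA\<^esub> x = (\<lambda>n\<in>posnat. inv\<^bsub>alt_group (d n)\<^esub> x n)"
    unfolding prod_alt_def by (intro inv_product_group) (auto simp: PA_carrier grp_alt)
  also have "\<dots> = (\<lambda>n\<in>posnat. inv' (x n))"
  proof (intro restrict_ext)
    fix n assume "n \<in> posnat"
    then have "x n \<in> carrier (alt_group (d n))" using x by (auto simp: PA_carrier)
    then show "inv\<^bsub>alt_group (d n)\<^esub> x n = inv' (x n)" by (rule alt_group_inv_equality)
  qed
  finally show ?thesis .
qed

lemma PA_mem: "x \<in> carrier PA \<Longrightarrow> n \<ge> 1 \<Longrightarrow> x n \<in> carrier (alt_group (d n))"
  by (auto simp: PA_carrier)

lemma PA_perm: "x \<in> carrier PA \<Longrightarrow> n \<ge> 1 \<Longrightarrow> x n permutes {1..d n}"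
  using PA_mem alt_group_carrier by blast

lemma alpha_n: "n \<ge> 1 \<Longrightarrow> \<alpha> n = cycle_of_list [1..<d n + 1]"
  by (simp add: alpha_seq_def del: upt_Suc)

lemma beta_n: "n \<ge> 1 \<Longrightarrow> \<beta> n = cycle_of_list [1, 1 + r n, 1 + 2 * r n]"
  by (simp add: beta_seq_def)

lemma alpha_PA: "\<alpha> \<in> carrier PA"
proof -
  have "\<alpha> n \<in> carrier (alt_group (d n))" if "n \<ge> 1" for n
    using alpha_alt[of "d n"] d_odd[OF that] d_pos[OF that] alpha_n[OF that] by simp
  then show ?thesis unfolding PA_carrier by (intro PiE_I) (auto simp: alpha_seq_def)
qed

lemma beta_PA: "\<beta> \<in> carrier PA"
proof -
  have "\<beta> n \<in> carrier (alt_group (d n))" if n: "n \<ge> 1" for n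
  proof -
    have "distinct [1, 1 + r n, 1 + 2 * r n]" using r_pos[OF n] by auto
    moreover have "{1, 1 + r n, 1 + 2 * r n} \<subseteq> {1..d n}" using rd[OF n] r_pos[OF n] by auto
    ultimately show ?thesis using cyc3_alt beta_n[OF n] by simp
  qed
  then show ?thesis unfolding PA_carrier by (intro PiE_I) (auto simp: beta_seq_def)
qed

lemma GG_carrier: "carrier GG = generate PA {\<alpha>, \<beta>}"
  using alpha_PA beta_PA by (simp add: carrier_subgroup_generated Int_absorb1)

lemma GG_sub: "carrier GG \<subseteq> carrier PA"
proof
  fix x assume "x \<in> carrier GG"
  then have "x \<in> generate PA {\<alpha>, \<beta>}" by (simp add: GG_carrier)
  then show "x \<in> carrier PA" by (rule group.generate_in_carrier[OF PA_group, rotated]) (use alpha_PA beta_PA in auto)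
qed

lemma GG_group: "group GG" using group.group_subgroup_generated[OF PA_group] .

lemma GG_mult: "x \<otimes>\<^bsub>GG\<^esub> y = x \<otimes>\<^bsub>PA\<^esub> y" by simp

lemma GG_one: "\<one>\<^bsub>GG\<^esub> = \<one>\<^bsub>PA\<^esub>" by simp

lemma GG_inv: "x \<in> carrier GG \<Longrightarrow> inv\<^bsub>GG\<^esub> x = inv\<^bsub>PA\<^esub> x"
  by (rule group.inv_subgroup_generated[OF PA_group])

lemma alpha_GG: "\<alpha> \<in> carrier GG" unfolding GG_carrier by (auto intro: generate.incl)
lemma beta_GG: "\<beta> \<in> carrier GG" unfolding GG_carrier by (auto intro: generate.incl)


definition approx :: "(nat \<Rightarrow> nat \<Rightarrow> nat) \<Rightarrow> (int \<Rightarrow> int) \<times> int \<Rightarrow> bool" where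
  "approx g w \<longleftrightarrow> eventually (\<lambda>n. g n = Phi d r n w) sequentially"

lemma ev_ge1: "eventually (\<lambda>n. (1::nat) \<le> n) sequentially"
  by (rule eventually_ge_at_top)

lemma ev_win:
  assumes "finite S"
  shows "eventually (\<lambda>n. \<forall>m\<in>S. 4 * \<bar>m\<bar> < int (r n)) sequentially"
proof -
  obtain B where B: "\<And>m. m \<in> S \<Longrightarrow> \<bar>m\<bar> \<le> B" and "0 \<le> B"
  proof -
    have "finite (abs ` S)" using assms by simp
    then obtain B where "\<forall>x\<in>abs ` S. x \<le> B" using finite_nat_set_iff_bounded_le
      by (metis bdd_above_def bdd_above_finite)
    then show ?thesis using that[of "max B 0"] by fastforce
  qed
  have "eventually (\<lambda>n. nat (4 * B) + 1 \<le> n) sequentially" by (rule eventually_ge_at_top)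
  then show ?thesis
  proof (rule eventually_mono)
    fix n assume n: "nat (4 * B) + 1 \<le> n"
    then have "n \<le> r n" using r_ge by simp
    then have "4 * B < int (r n)" using n \<open>0 \<le> B\<close> by linarith
    then show "\<forall>m\<in>S. 4 * \<bar>m\<bar> < int (r n)" using B by fastforce
  qed
qed

lemma ev_r: "eventually (\<lambda>n. c \<le> r n) sequentially"
proof -
  have "eventually (\<lambda>n. max c 1 \<le> n) sequentially" by (rule eventually_ge_at_top)
  then show ?thesis by (rule eventually_mono) (use r_ge in force)
qed

lemma W_supp: "w \<in> carrier W \<Longrightarrow> finite {m. fst w m \<noteq> 0}"
  by (simp add: lamp_carrier)

lemma W_vals: "w \<in> carrier W \<Longrightarrow> fst w m \<in> {0,1,2}"
  by (simp add: lamp_carrier)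

lemma Phi_mult_ev:
  assumes v: "v \<in> carrier W" and v': "v' \<in> carrier W"
  shows "eventually (\<lambda>n. Phi d r n v \<circ> Phi d r n v' = Phi d r n (v \<otimes>\<^bsub>W\<^esub> v')) sequentially"
proof -
  obtain f k where vf: "v = (f,k)" by (cases v)
  obtain g l where vg: "v' = (g,l)" by (cases v')
  let ?S = "{m. g m \<noteq> 0} \<union> (\<lambda>m. m + k) ` {m. g m \<noteq> 0}"
  have "finite ?S" using W_supp[OF v'] vg by simp
  then have "eventually (\<lambda>n. (\<forall>m\<in>?S. 4 * \<bar>m\<bar> < int (r n)) \<and> 1 \<le> n) sequentially"
    using ev_win ev_ge1 eventually_conj by blast
  then show ?thesis
  proof (rule eventually_mono)
    fix n assume h: "(\<forall>m\<in>?S. 4 * \<bar>m\<bar> < int (r n)) \<and> 1 \<le> n"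
    have cond: "win r n m \<and> win r n (m + k)" if "g m mod 3 \<noteq> 0" for m
    proof -
      have "g m \<noteq> 0" using that by auto
      then have "m \<in> ?S" "m + k \<in> ?S" by blast+
      then have "4 * \<bar>m\<bar> < int (r n)" "4 * \<bar>m + k\<bar> < int (r n)" using h by blast+
      then show ?thesis unfolding win_def by linarith
    qed
    have "Phi d r n (f,k) (Phi d r n (g,l) x) = Phi d r n ((f,k) \<otimes>\<^bsub>W\<^esub> (g,l)) x" for x
      using Phi_mult[where d=d and r=r and n=n, OF rd d_pos cond] h by blast
    then show "Phi d r n v \<circ> Phi d r n v' = Phi d r n (v \<otimes>\<^bsub>W\<^esub> v')" by (auto simp: vf vg)
  qed
qed

lemma ev_Phi_one: "eventually (\<lambda>n. Phi d r n \<one>\<^bsub>W\<^esub> = id) sequentially"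
  using ev_ge1 by (rule eventually_mono) (simp add: lamp_one Phi_one rd)

lemma approx_mult:
  assumes g: "g \<in> carrier PA" and h: "h \<in> carrier PA" and v: "v \<in> carrier W" and v': "v' \<in> carrier W"
    and ag: "approx g v" and ah: "approx h v'"
  shows "approx (g \<otimes>\<^bsub>PA\<^esub> h) (v \<otimes>\<^bsub>W\<^esub> v')"
  unfolding approx_def
proof -
  have "eventually (\<lambda>n. g n = Phi d r n v \<and> h n = Phi d r n v' \<and> 1 \<le> n \<and>
      Phi d r n v \<circ> Phi d r n v' = Phi d r n (v \<otimes>\<^bsub>W\<^esub> v')) sequentially"
    using ag ah Phi_mult_ev[OF v v'] unfolding approx_def
    by (intro eventually_conj) (simp_all add: eventually_ge_at_top)
  then show "eventually (\<lambda>n. (g \<otimes>\<^bsub>PA\<^esub> h) n = Phi d r n (v \<otimes>\<^bsub>W\<^esub> v')) sequentially"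
    by (rule eventually_mono) (auto simp: PA_mult)
qed

lemma approx_one: "approx \<one>\<^bsub>PA\<^esub> \<one>\<^bsub>W\<^esub>"
  unfolding approx_def
proof -
  have "eventually (\<lambda>n. 1 \<le> n \<and> Phi d r n \<one>\<^bsub>W\<^esub> = id) sequentially"
    using ev_Phi_one by (intro eventually_conj) (simp_all add: eventually_ge_at_top)
  then show "eventually (\<lambda>n. \<one>\<^bsub>PA\<^esub> n = Phi d r n \<one>\<^bsub>W\<^esub>) sequentially"
    by (rule eventually_mono) (simp add: PA_one)
qed

lemma approx_inv:
  assumes g: "g \<in> carrier PA" and v: "v \<in> carrier W" and ag: "approx g v"
  shows "approx (inv\<^bsub>PA\<^esub> g) (inv\<^bsub>W\<^esub> v)"
proof -
  have vi: "inv\<^bsub>W\<^esub> v \<in> carrier W" using v by (simp add: group.inv_closed[OF lamp_group])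
  have "eventually (\<lambda>n. g n = Phi d r n v \<and> 1 \<le> n \<and>
      Phi d r n (inv\<^bsub>W\<^esub> v) \<circ> Phi d r n v = Phi d r n (inv\<^bsub>W\<^esub> v \<otimes>\<^bsub>W\<^esub> v) \<and>
      Phi d r n v \<circ> Phi d r n (inv\<^bsub>W\<^esub> v) = Phi d r n (v \<otimes>\<^bsub>W\<^esub> inv\<^bsub>W\<^esub> v) \<and>
      Phi d r n \<one>\<^bsub>W\<^esub> = id) sequentially"
    using ag Phi_mult_ev[OF vi v] Phi_mult_ev[OF v vi] ev_Phi_one unfolding approx_def
    by (intro eventually_conj) (simp_all add: eventually_ge_at_top)
  then show ?thesis unfolding approx_def
  proof (rule eventually_mono)
    fix n assume h: "g n = Phi d r n v \<and> 1 \<le> n \<and>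
      Phi d r n (inv\<^bsub>W\<^esub> v) \<circ> Phi d r n v = Phi d r n (inv\<^bsub>W\<^esub> v \<otimes>\<^bsub>W\<^esub> v) \<and>
      Phi d r n v \<circ> Phi d r n (inv\<^bsub>W\<^esub> v) = Phi d r n (v \<otimes>\<^bsub>W\<^esub> inv\<^bsub>W\<^esub> v) \<and>
      Phi d r n \<one>\<^bsub>W\<^esub> = id"
    have e1: "Phi d r n (inv\<^bsub>W\<^esub> v) \<circ> g n = id"
      using h group.l_inv[OF lamp_group v] by simp
    have e2: "g n \<circ> Phi d r n (inv\<^bsub>W\<^esub> v) = id"
      using h group.r_inv[OF lamp_group v] by simp
    have "(inv\<^bsub>PA\<^esub> g) n = inv' (g n)" using g h by (simp add: PA_inv)
    also have "\<dots> = Phi d r n (inv\<^bsub>W\<^esub> v)" by (rule inv_unique_comp[OF e2 e1])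
    finally show "(inv\<^bsub>PA\<^esub> g) n = Phi d r n (inv\<^bsub>W\<^esub> v)" .
  qed
qed

lemma approx_alpha: "approx \<alpha> lamp_a"
  unfolding approx_def using ev_ge1
  by (rule eventually_mono) (simp add: alpha_n lamp_a_def Phi_alpha rd del: upt_Suc)

lemma approx_beta: "approx \<beta> (lamp_b 0)"
  unfolding approx_def using ev_ge1
proof (rule eventually_mono)
  fix n :: nat assume n: "1 \<le> n"
  have a: "\<beta> n = cycle_of_list [1, 1 + r n, 1 + 2 * r n]" by (rule beta_n[OF n])
  have b: "Phi d r n (lamp_b 0) = cycle_of_list [1, 1 + r n, 1 + 2 * r n]"
    by (rule Phi_beta[where d=d and r=r and n=n, OF r_pos[OF n] rd[OF n]])
  show "\<beta> n = Phi d r n (lamp_b 0)" by (simp only: a b)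
qed

end

context lampctx
begin

lemma PA_m_closed: "x \<in> carrier PA \<Longrightarrow> y \<in> carrier PA \<Longrightarrow> x \<otimes>\<^bsub>PA\<^esub> y \<in> carrier PA"
  by (rule monoid.m_closed[OF group.is_monoid[OF PA_group]])
lemma W_m_closed: "x \<in> carrier W \<Longrightarrow> y \<in> carrier W \<Longrightarrow> x \<otimes>\<^bsub>W\<^esub> y \<in> carrier W"
  by (rule monoid.m_closed[OF group.is_monoid[OF lamp_group]])
lemma GG_m_closed: "x \<in> carrier GG \<Longrightarrow> y \<in> carrier GG \<Longrightarrow> x \<otimes>\<^bsub>GG\<^esub> y \<in> carrier GG"
  by (rule monoid.m_closed[OF group.is_monoid[OF GG_group]])
lemma PA_one_closed: "\<one>\<^bsub>PA\<^esub> \<in> carrier PA"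
  by (rule monoid.one_closed[OF group.is_monoid[OF PA_group]])
lemma W_one_closed: "\<one>\<^bsub>W\<^esub> \<in> carrier W"
  by (rule monoid.one_closed[OF group.is_monoid[OF lamp_group]])

lemma lamp_a_W: "lamp_a \<in> carrier W" by (simp add: lamp_a_def lamp_carrier)

lemma lamp_b_W: "lamp_b m \<in> carrier W"
proof -
  have "{x. (if x = m then 1 else 0) \<noteq> (0::int)} = {m}" by auto
  then show ?thesis by (simp add: lamp_b_def lamp_carrier)
qed

lemma ev_witness: "eventually P sequentially \<Longrightarrow> (\<And>n. P n \<Longrightarrow> Q) \<Longrightarrow> Q"
  by (auto simp: eventually_sequentially)

lemma approx_unique:
  assumes w: "w \<in> carrier W" and w': "w' \<in> carrier W" and a: "approx g w" and a': "approx g w'"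
  shows "w = w'"
proof -
  interpret WG: group W by (rule lamp_group)
  define v where "v = inv\<^bsub>W\<^esub> w' \<otimes>\<^bsub>W\<^esub> w"
  have wi: "inv\<^bsub>W\<^esub> w' \<in> carrier W" using w' by simp
  have v: "v \<in> carrier W" unfolding v_def using wi w by simp
  obtain fv kv where vf: "v = (fv, kv)" by (cases v)
  have fin: "finite {m. fv m \<noteq> 0}" using W_supp[OF v] vf by simp
  have "eventually (\<lambda>n. g n = Phi d r n w \<and> g n = Phi d r n w' \<and>
      Phi d r n (inv\<^bsub>W\<^esub> w') \<circ> Phi d r n w = Phi d r n v \<and>
      Phi d r n (inv\<^bsub>W\<^esub> w') \<circ> Phi d r n w' = Phi d r n (inv\<^bsub>W\<^esub> w' \<otimes>\<^bsub>W\<^esub> w') \<and>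
      Phi d r n \<one>\<^bsub>W\<^esub> = id \<and> 1 \<le> n \<and> nat \<bar>kv\<bar> + 4 \<le> r n \<and>
      (\<forall>m\<in>{m. fv m \<noteq> 0}. 4 * \<bar>m\<bar> < int (r n))) sequentially"
    using a a' Phi_mult_ev[OF wi w] Phi_mult_ev[OF wi w'] ev_Phi_one ev_r ev_win[OF fin]
    unfolding approx_def v_def
    by (intro eventually_conj) (simp_all add: eventually_ge_at_top)
  then obtain n where h: "g n = Phi d r n w \<and> g n = Phi d r n w' \<and>
      Phi d r n (inv\<^bsub>W\<^esub> w') \<circ> Phi d r n w = Phi d r n v \<and>
      Phi d r n (inv\<^bsub>W\<^esub> w') \<circ> Phi d r n w' = Phi d r n (inv\<^bsub>W\<^esub> w' \<otimes>\<^bsub>W\<^esub> w') \<and>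
      Phi d r n \<one>\<^bsub>W\<^esub> = id \<and> 1 \<le> n \<and> nat \<bar>kv\<bar> + 4 \<le> r n \<and>
      (\<forall>m\<in>{m. fv m \<noteq> 0}. 4 * \<bar>m\<bar> < int (r n))"
    by (rule ev_witness)
  have n1: "1 \<le> n" using h by blast
  have e0: "Phi d r n w = Phi d r n w'" using h by metis
  have e1: "Phi d r n (inv\<^bsub>W\<^esub> w') \<circ> Phi d r n w = Phi d r n v" using h by blast
  have e2: "Phi d r n (inv\<^bsub>W\<^esub> w') \<circ> Phi d r n w' = Phi d r n (inv\<^bsub>W\<^esub> w' \<otimes>\<^bsub>W\<^esub> w')" using h by blast
  have e3: "Phi d r n \<one>\<^bsub>W\<^esub> = id" using h by blast
  have "Phi d r n v = id" using e0 e1 e2 e3 WG.l_inv[OF w'] by simp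
  then have idp: "\<And>x. Phi d r n (fv,kv) x = x" using vf by simp
  have r4: "4 \<le> r n" using h by linarith
  have kb: "\<bar>kv\<bar> < int (d n)" using h rd[OF n1] by linarith
  have sup: "4 * \<bar>m\<bar> < int (r n)" if "fv m mod 3 \<noteq> 0" for m
  proof -
    have "fv m \<noteq> 0" using that by auto
    then show ?thesis using h by blast
  qed
  have "kv = 0 \<and> (\<forall>m. fv m mod 3 = 0)"
    by (rule Phi_id_imp[where d=d and r=r and n=n, OF rd[OF n1] r4 kb sup idp])
  moreover have "fv m \<in> {0,1,2}" for m using W_vals[OF v] vf by simp
  ultimately have "fv m = 0" for m by (metis insert_iff mod3_id singletonD zero_neq_one)
  then have "fv = (\<lambda>_. 0)" "kv = 0" using \<open>kv = 0 \<and> _\<close> by auto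
  then have "v = \<one>\<^bsub>W\<^esub>" using vf by (simp add: lamp_one)
  then have "w' \<otimes>\<^bsub>W\<^esub> v = w'" using w' by simp
  moreover have "w' \<otimes>\<^bsub>W\<^esub> v = w" unfolding v_def using w w' wi by (simp add: WG.m_assoc[symmetric])
  ultimately show ?thesis by simp
qed

lemma approx_exists_gen:
  assumes "x \<in> generate PA {\<alpha>, \<beta>}"
  shows "x \<in> carrier PA \<and> (\<exists>w\<in>carrier W. approx x w)"
  using assms
proof (induction rule: generate.induct)
  case one
  then show ?case using approx_one PA_one_closed W_one_closed by blast
next
  case (incl h)
  then show ?case using approx_alpha approx_beta alpha_PA beta_PA lamp_a_W lamp_b_W by blast
next
  case (inv h)
  then have h: "h \<in> carrier PA" "\<exists>w\<in>carrier W. approx h w"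
    using approx_alpha approx_beta alpha_PA beta_PA lamp_a_W lamp_b_W by blast+
  then obtain w where w: "w \<in> carrier W" "approx h w" by blast
  have "approx (inv\<^bsub>PA\<^esub> h) (inv\<^bsub>W\<^esub> w)" by (rule approx_inv[OF h(1) w])
  moreover have "inv\<^bsub>W\<^esub> w \<in> carrier W" using w group.inv_closed[OF lamp_group] by blast
  moreover have "inv\<^bsub>PA\<^esub> h \<in> carrier PA" using h group.inv_closed[OF PA_group] by blast
  ultimately show ?case by blast
next
  case (eng h1 h2)
  then obtain w1 w2 where w: "w1 \<in> carrier W" "approx h1 w1" "w2 \<in> carrier W" "approx h2 w2" by blast
  have "approx (h1 \<otimes>\<^bsub>PA\<^esub> h2) (w1 \<otimes>\<^bsub>W\<^esub> w2)" using approx_mult eng w by blast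
  moreover have "w1 \<otimes>\<^bsub>W\<^esub> w2 \<in> carrier W" using w W_m_closed by blast
  moreover have "h1 \<otimes>\<^bsub>PA\<^esub> h2 \<in> carrier PA" using eng PA_m_closed by blast
  ultimately show ?case by blast
qed

lemma approx_exists: "x \<in> carrier GG \<Longrightarrow> \<exists>w\<in>carrier W. approx x w"
  using approx_exists_gen GG_carrier by blast

definition tau :: "(nat \<Rightarrow> nat \<Rightarrow> nat) \<Rightarrow> (int \<Rightarrow> int) \<times> int" where
  "tau x = (SOME w. w \<in> carrier W \<and> approx x w)"

lemma tau_spec: "x \<in> carrier GG \<Longrightarrow> tau x \<in> carrier W \<and> approx x (tau x)"
  unfolding tau_def using approx_exists by (metis (mono_tags, lifting) someI_ex)

lemma tau_eq: "x \<in> carrier GG \<Longrightarrow> w \<in> carrier W \<Longrightarrow> approx x w \<Longrightarrow> tau x = w"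
  using tau_spec approx_unique by blast

lemma tau_hom: "tau \<in> hom GG W"
proof (rule homI)
  fix x assume "x \<in> carrier GG" then show "tau x \<in> carrier W" using tau_spec by blast
next
  fix x y assume x: "x \<in> carrier GG" and y: "y \<in> carrier GG"
  have xy: "x \<otimes>\<^bsub>GG\<^esub> y \<in> carrier GG" using x y GG_m_closed by blast
  have "approx (x \<otimes>\<^bsub>PA\<^esub> y) (tau x \<otimes>\<^bsub>W\<^esub> tau y)"
    using approx_mult[of x y "tau x" "tau y"] x y tau_spec GG_sub by blast
  moreover have "tau x \<otimes>\<^bsub>W\<^esub> tau y \<in> carrier W"
    using x y tau_spec W_m_closed by blast
  ultimately show "tau (x \<otimes>\<^bsub>GG\<^esub> y) = tau x \<otimes>\<^bsub>W\<^esub> tau y" using tau_eq xy by simp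
qed

lemma tau_alpha: "tau \<alpha> = lamp_a"
  using tau_eq alpha_GG lamp_a_W approx_alpha by blast

lemma tau_beta: "tau \<beta> = lamp_b 0"
  using tau_eq beta_GG lamp_b_W approx_beta by blast

end

context lampctx
begin

lemma lamp_inv: "(f,k) \<in> carrier lamplighter3 \<Longrightarrow> inv\<^bsub>lamplighter3\<^esub> (f,k) = (\<lambda>m. (- f (m + k)) mod 3, - k)"
proof -
  assume x: "(f,k) \<in> carrier lamplighter3"
  have fs: "finite {m. f m \<noteq> 0}" using x by (auto simp: lamp_carrier)
  have "{m. (- f (m + k)) mod 3 \<noteq> 0} \<subseteq> (\<lambda>m. m - k) ` {m. f m \<noteq> 0}"
  proof
    fix m assume "m \<in> {m. (- f (m + k)) mod 3 \<noteq> 0}"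
    then have "f (m + k) \<noteq> 0" by auto
    then show "m \<in> (\<lambda>m. m - k) ` {m. f m \<noteq> 0}" by (auto intro: image_eqI[where x="m + k"])
  qed
  then have fin: "finite {m. (- f (m + k)) mod 3 \<noteq> 0}" using fs by (meson finite_imageI finite_subset)
  have c: "(\<lambda>m. (- f (m + k)) mod 3, - k) \<in> carrier lamplighter3"
    unfolding lamp_carrier using fin mod3_range by simp
  have "((- f (m + k)) mod 3 + f (m + k)) mod 3 = 0" for m
    by (simp add: mod_add_left_eq)
  then have e: "(\<lambda>m. (- f (m + k)) mod 3, - k) \<otimes>\<^bsub>lamplighter3\<^esub> (f,k) = \<one>\<^bsub>lamplighter3\<^esub>"
    by (simp add: lamp_mult lamp_one)
  show ?thesis by (rule group.inv_equality[OF lamp_group e x c])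
qed

definition Pw :: "(int \<Rightarrow> int) \<times> int \<Rightarrow> bool" where
  "Pw w \<longleftrightarrow> (\<exists>x\<in>carrier GG. approx x w)"

lemma Pw_mult: "Pw v \<Longrightarrow> Pw v' \<Longrightarrow> v \<in> carrier W \<Longrightarrow> v' \<in> carrier W \<Longrightarrow> Pw (v \<otimes>\<^bsub>W\<^esub> v')"
proof -
  assume "Pw v" "Pw v'" and v: "v \<in> carrier W" and v': "v' \<in> carrier W"
  then obtain x y where x: "x \<in> carrier GG" "approx x v" and y: "y \<in> carrier GG" "approx y v'"
    unfolding Pw_def by blast
  have "approx (x \<otimes>\<^bsub>PA\<^esub> y) (v \<otimes>\<^bsub>W\<^esub> v')"
    using approx_mult[of x y v v'] x y v v' GG_sub by blast
  moreover have "x \<otimes>\<^bsub>PA\<^esub> y \<in> carrier GG" using GG_m_closed[OF x(1) y(1)] by simp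
  ultimately show ?thesis unfolding Pw_def by blast
qed

lemma Pw_inv: "Pw v \<Longrightarrow> v \<in> carrier W \<Longrightarrow> Pw (inv\<^bsub>W\<^esub> v)"
proof -
  assume "Pw v" and v: "v \<in> carrier W"
  then obtain x where x: "x \<in> carrier GG" "approx x v" unfolding Pw_def by blast
  have "approx (inv\<^bsub>PA\<^esub> x) (inv\<^bsub>W\<^esub> v)" using approx_inv[of x v] x v GG_sub by blast
  moreover have "inv\<^bsub>PA\<^esub> x \<in> carrier GG"
    using group.inv_closed[OF GG_group x(1)] GG_inv[OF x(1)] by simp
  ultimately show ?thesis unfolding Pw_def by blast
qed

lemma Pw_one: "Pw \<one>\<^bsub>W\<^esub>"
proof -
  have "\<one>\<^bsub>PA\<^esub> \<in> carrier GG" using monoid.one_closed[OF group.is_monoid[OF GG_group]] by simp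
  then show ?thesis unfolding Pw_def using approx_one by blast
qed

lemma Pw_a: "Pw lamp_a" unfolding Pw_def using alpha_GG approx_alpha by blast
lemma Pw_b: "Pw (lamp_b 0)" unfolding Pw_def using beta_GG approx_beta by blast

lemma shift_W: "(\<lambda>_. 0, k) \<in> carrier W" by (simp add: lamp_carrier)

lemma Pw_shift_nat: "Pw (\<lambda>_. 0, int k)"
proof (induction k)
  case 0 then show ?case using Pw_one by (simp add: lamp_one)
next
  case (Suc k)
  have "(\<lambda>_. 0, int k) \<otimes>\<^bsub>W\<^esub> lamp_a = (\<lambda>_. 0, int (Suc k))"
    by (simp add: lamp_a_def lamp_mult)
  then show ?case using Pw_mult[OF Suc Pw_a shift_W lamp_a_W] by simp
qed

lemma Pw_shift: "Pw (\<lambda>_. 0, k)"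
proof (cases "k \<ge> 0")
  case True
  then show ?thesis using Pw_shift_nat[of "nat k"] by simp
next
  case False
  have "inv\<^bsub>W\<^esub> (\<lambda>_. 0, int (nat (- k))) = (\<lambda>_. 0, k)"
    using False by (subst lamp_inv) (auto simp: shift_W)
  then show ?thesis using Pw_inv[OF Pw_shift_nat shift_W] by metis
qed

lemma delta_W: "c \<in> {0,1,2} \<Longrightarrow> (\<lambda>x. if x = m then c else 0, 0) \<in> carrier W"
proof -
  assume c: "c \<in> {0,1,2}"
  have "{x. (if x = m then c else 0) \<noteq> 0} \<subseteq> {m}" by auto
  then have "finite {x. (if x = m then c else 0) \<noteq> 0}" using finite_subset by blast
  then show ?thesis using c by (simp add: lamp_carrier)
qed

lemma Pw_delta1: "Pw (\<lambda>x. if x = m then 1 else 0, 0)"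
proof -
  have "(\<lambda>_. 0, m) \<otimes>\<^bsub>W\<^esub> lamp_b 0 \<otimes>\<^bsub>W\<^esub> (\<lambda>_. 0, - m) = (\<lambda>x. if x = m then 1 else 0, 0)"
    by (simp add: lamp_b_def lamp_mult fun_eq_iff)
  moreover have "Pw ((\<lambda>_. 0, m) \<otimes>\<^bsub>W\<^esub> lamp_b 0 \<otimes>\<^bsub>W\<^esub> (\<lambda>_. 0, - m))"
    by (intro Pw_mult Pw_shift Pw_b W_m_closed shift_W lamp_b_W)
  ultimately show ?thesis by simp
qed

lemma Pw_delta: "c \<in> {0,1,2} \<Longrightarrow> Pw (\<lambda>x. if x = m then c else 0, 0)"
proof -
  assume c: "c \<in> {0,1,2}"
  have d1: "(\<lambda>x. if x = m then 1 else 0, 0) \<in> carrier W" using delta_W[of 1] by simp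
  consider "c = 0" | "c = 1" | "c = 2" using c by auto
  then show ?thesis
  proof cases
    case 1
    then have "(\<lambda>x. if x = m then c else (0::int)) = (\<lambda>_. 0)" by auto
    then show ?thesis using Pw_one by (simp add: lamp_one)
  next
    case 2 then show ?thesis using Pw_delta1[of m] by (simp only:)
  next
    case 3
    have "(\<lambda>x. if x = m then 1 else 0, 0) \<otimes>\<^bsub>W\<^esub> (\<lambda>x. if x = m then 1 else 0, 0) = (\<lambda>x. if x = m then c else 0, 0)"
      using 3 by (simp add: lamp_mult fun_eq_iff)
    then show ?thesis using Pw_mult[OF Pw_delta1 Pw_delta1 d1 d1] by simp
  qed
qed

lemma Pw_fin:
  assumes "finite S"
  shows "\<forall>f. (\<forall>m. f m \<in> {0,1,2}) \<longrightarrow> {m. f m \<noteq> 0} = S \<longrightarrow> Pw (f, 0)"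
  using assms
proof (induction S rule: finite_induct)
  case empty
  show ?case
  proof (intro allI impI)
    fix f :: "int \<Rightarrow> int" assume "{m. f m \<noteq> 0} = {}"
    then have "f = (\<lambda>_. 0)" by auto
    then show "Pw (f, 0)" using Pw_one by (simp add: lamp_one)
  qed
next
  case (insert a S)
  show ?case
  proof (intro allI impI)
    fix f :: "int \<Rightarrow> int" assume f: "\<forall>m. f m \<in> {0,1,2}" and sf: "{m. f m \<noteq> 0} = insert a S"
    define f' where "f' = f(a := 0)"
    have f'v: "\<forall>m. f' m \<in> {0,1,2}" using f by (simp add: f'_def)
    have "{m. f' m \<noteq> 0} = S" using sf insert(2) by (auto simp: f'_def)
    then have P': "Pw (f', 0)" using insert(3) f'v by blast
    have f'W: "(f', 0) \<in> carrier W" using f'v \<open>{m. f' m \<noteq> 0} = S\<close> insert(1) by (simp add: lamp_carrier)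
    have dW: "(\<lambda>x. if x = a then f a else 0, 0) \<in> carrier W" using delta_W f by blast
    have "(\<lambda>x. if x = a then f a else 0, 0) \<otimes>\<^bsub>W\<^esub> (f', 0) = (f, 0)"
    proof -
      have "((if x = a then f a else 0) + f' x) mod 3 = f x" for x
        using f[rule_format, of x] by (auto simp: f'_def)
      then show ?thesis by (simp add: lamp_mult fun_eq_iff)
    qed
    then show "Pw (f, 0)" using Pw_mult[OF Pw_delta[OF f[rule_format]] P' dW f'W] by simp
  qed
qed

lemma Pw_all: "w \<in> carrier W \<Longrightarrow> Pw w"
proof -
  assume w: "w \<in> carrier W"
  obtain f k where wf: "w = (f,k)" by (cases w)
  have f: "\<forall>m. f m \<in> {0,1,2}" "finite {m. f m \<noteq> 0}" using w wf by (auto simp: lamp_carrier)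
  then have P0: "Pw (f, 0)" using Pw_fin by blast
  have f0W: "(f, 0) \<in> carrier W" using f by (simp add: lamp_carrier)
  have "(f, 0) \<otimes>\<^bsub>W\<^esub> (\<lambda>_. 0, k) = (f, k)"
  proof -
    have "(f x + 0) mod 3 = f x" for x using f(1) mod3_id by simp
    then show ?thesis by (simp add: lamp_mult)
  qed
  moreover have "Pw ((f, 0) \<otimes>\<^bsub>W\<^esub> (\<lambda>_. 0, k))" by (rule Pw_mult[OF P0 Pw_shift f0W shift_W])
  ultimately show ?thesis using wf by simp
qed

lemma tau_surj: "tau ` carrier GG = carrier W"
proof
  show "tau ` carrier GG \<subseteq> carrier W" using tau_spec by blast
next
  show "carrier W \<subseteq> tau ` carrier GG"
  proof
    fix w assume w: "w \<in> carrier W"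
    then obtain x where x: "x \<in> carrier GG" "approx x w" using Pw_all unfolding Pw_def by blast
    then have "tau x = w" using tau_eq w by blast
    then show "w \<in> tau ` carrier GG" using x by blast
  qed
qed

lemma tau_epi: "tau \<in> epi GG W"
  unfolding epi_def using tau_hom tau_surj by blast

lemma approx_one_iff:
  assumes x: "x \<in> carrier PA"
  shows "approx x \<one>\<^bsub>W\<^esub> \<longleftrightarrow> finite {n \<in> posnat. x n \<noteq> id}"
proof -
  have "approx x \<one>\<^bsub>W\<^esub> \<longleftrightarrow> eventually (\<lambda>n. x n = id) sequentially"
  proof
    assume "approx x \<one>\<^bsub>W\<^esub>"
    then show "eventually (\<lambda>n. x n = id) sequentially"
      using ev_Phi_one unfolding approx_def by (auto elim: eventually_elim2)
  next
    assume "eventually (\<lambda>n. x n = id) sequentially"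
    then show "approx x \<one>\<^bsub>W\<^esub>"
      using ev_Phi_one unfolding approx_def by (auto elim: eventually_elim2)
  qed
  also have "\<dots> \<longleftrightarrow> finite {n. x n \<noteq> id}"
    by (simp add: cofinite_eq_sequentially[symmetric] eventually_cofinite)
  also have "\<dots> \<longleftrightarrow> finite {n \<in> posnat. x n \<noteq> id}"
  proof
    assume "finite {n. x n \<noteq> id}" then show "finite {n \<in> posnat. x n \<noteq> id}" by (rule rev_finite_subset) auto
  next
    assume "finite {n \<in> posnat. x n \<noteq> id}"
    then have "finite (insert 0 {n \<in> posnat. x n \<noteq> id})" by simp
    then show "finite {n. x n \<noteq> id}" by (rule rev_finite_subset) auto
  qed
  finally show ?thesis .
qed

lemma sum_carrier: "carrier (sum_alt d) = {x \<in> carrier PA. finite {n \<in> posnat. x n \<noteq> id}}"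
  unfolding sum_alt_def PA_carrier
  by (subst carrier_sum_group) (auto simp: grp_alt alt_group_one)

lemma kernel_eq: "kernel GG W tau = carrier GG \<inter> carrier (sum_alt d)"
proof -
  have "kernel GG W tau = {x \<in> carrier GG. tau x = \<one>\<^bsub>W\<^esub>}" by (simp add: kernel_def)
  also have "\<dots> = {x \<in> carrier GG. approx x \<one>\<^bsub>W\<^esub>}"
  proof (intro Collect_cong conj_cong refl)
    fix x assume x: "x \<in> carrier GG"
    show "tau x = \<one>\<^bsub>W\<^esub> \<longleftrightarrow> approx x \<one>\<^bsub>W\<^esub>"
    proof
      assume "tau x = \<one>\<^bsub>W\<^esub>" then show "approx x \<one>\<^bsub>W\<^esub>" using tau_spec[OF x] by simp
    next
      assume "approx x \<one>\<^bsub>W\<^esub>" then show "tau x = \<one>\<^bsub>W\<^esub>" using tau_eq[OF x W_one_closed] by simp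
    qed
  qed
  also have "\<dots> = carrier GG \<inter> carrier (sum_alt d)"
  proof (unfold sum_carrier, intro equalityI subsetI)
    fix x assume "x \<in> {x \<in> carrier GG. approx x \<one>\<^bsub>W\<^esub>}"
    then have x: "x \<in> carrier GG" "approx x \<one>\<^bsub>W\<^esub>" by auto
    then have "x \<in> carrier PA" using GG_sub by auto
    then show "x \<in> carrier GG \<inter> {x \<in> carrier PA. finite {n \<in> posnat. x n \<noteq> id}}"
      using x approx_one_iff by auto
  next
    fix x assume "x \<in> carrier GG \<inter> {x \<in> carrier PA. finite {n \<in> posnat. x n \<noteq> id}}"
    then have x: "x \<in> carrier GG" "x \<in> carrier PA" "finite {n \<in> posnat. x n \<noteq> id}" by auto
    then show "x \<in> {x \<in> carrier GG. approx x \<one>\<^bsub>W\<^esub>}" using approx_one_iff by auto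
  qed
  finally show ?thesis .
qed

end

declare cycle_of_list.simps [simp del]

lemma cyc3_rot: "distinct [a,b,c] \<Longrightarrow> cycle_of_list [a,b,c] = cycle_of_list [b,c,a]"
proof (rule ext)
  fix x assume h: "distinct [a,b,c]"
  then have h2: "distinct [b,c,a]" by auto
  consider "x = a" | "x = b" | "x = c" | "x \<notin> {a,b,c}" by auto
  then show "cycle_of_list [a,b,c] x = cycle_of_list [b,c,a] x"
    by cases (use h in \<open>simp_all add: cyc3_apply[OF h] cyc3_apply[OF h2] eq_commute[of b a] eq_commute[of c a] eq_commute[of c b]\<close>)
qed

lemma cyc3_sq: "distinct [a,b,c] \<Longrightarrow> cycle_of_list [a,b,c] \<circ> cycle_of_list [a,b,c] = cycle_of_list [a,c,b]"
proof (rule ext)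
  fix x assume h: "distinct [a,b,c]"
  then have h2: "distinct [a,c,b]" by auto
  consider "x = a" | "x = b" | "x = c" | "x \<notin> {a,b,c}" by auto
  then show "(cycle_of_list [a,b,c] \<circ> cycle_of_list [a,b,c]) x = cycle_of_list [a,c,b] x"
    by cases (use h in \<open>simp_all add: cyc3_apply[OF h] cyc3_apply[OF h2] eq_commute[of b a] eq_commute[of c a] eq_commute[of c b]\<close>)
qed

lemma cyc3_inv: "distinct [a,b,c] \<Longrightarrow> inv' (cycle_of_list [a,b,c]) = cycle_of_list [a,c,b]"
proof (rule inv_unique_comp)
  assume h: "distinct [a,b,c]"
  then have h2: "distinct [a,c,b]" by auto
  show "cycle_of_list [a,b,c] \<circ> cycle_of_list [a,c,b] = id"
  proof
    fix x
    consider "x = a" | "x = b" | "x = c" | "x \<notin> {a,b,c}" by auto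
    then show "(cycle_of_list [a,b,c] \<circ> cycle_of_list [a,c,b]) x = id x"
      by cases (use h in \<open>simp_all add: cyc3_apply[OF h] cyc3_apply[OF h2] eq_commute[of b a] eq_commute[of c a] eq_commute[of c b]\<close>)
  qed
  show "cycle_of_list [a,c,b] \<circ> cycle_of_list [a,b,c] = id"
  proof
    fix x
    consider "x = a" | "x = b" | "x = c" | "x \<notin> {a,b,c}" by auto
    then show "(cycle_of_list [a,c,b] \<circ> cycle_of_list [a,b,c]) x = id x"
      by cases (use h in \<open>simp_all add: cyc3_apply[OF h] cyc3_apply[OF h2] eq_commute[of b a] eq_commute[of c a] eq_commute[of c b]\<close>)
  qed
qed

lemma cyc3_inv_sq: "distinct [a,b,c] \<Longrightarrow> inv' (cycle_of_list [a,b,c]) = cycle_of_list [a,b,c] \<circ> cycle_of_list [a,b,c]"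
  using cyc3_inv cyc3_sq by metis

lemma bij_cycle: "bij (cycle_of_list cs)"
  using permutation_bijective permutation_of_cycle by blast

lemma cyc3_conj:
  assumes "bij g" "distinct [x,y,z]"
  shows "g \<circ> cycle_of_list [x,y,z] \<circ> inv' g = cycle_of_list [g x, g y, g z]"
  using conjugation_of_cycle[OF assms(2) assms(1)] by simp

lemma Dcalc7:
  assumes "distinct [a0,a1,a2,a3,a4,a5]"
  shows "(cycle_of_list [a0,a1,a2] \<circ> cycle_of_list [a1,a2,a3] \<circ> cycle_of_list [a0,a2,a1] \<circ> cycle_of_list [a1,a3,a2]) \<circ>
         (cycle_of_list [a3,a4,a5] \<circ> (cycle_of_list [a0,a1,a2] \<circ> cycle_of_list [a1,a2,a3] \<circ> cycle_of_list [a0,a2,a1] \<circ> cycle_of_list [a1,a3,a2]) \<circ> cycle_of_list [a3,a5,a4])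
       = cycle_of_list [a0,a4,a3]"
proof (rule ext)
  fix x
  have d: "distinct [a0,a1,a2]" "distinct [a1,a2,a3]" "distinct [a0,a2,a1]" "distinct [a1,a3,a2]"
    "distinct [a3,a4,a5]" "distinct [a3,a5,a4]" "distinct [a0,a4,a3]" using assms by auto
  note simps = cyc3_apply[OF d(1)] cyc3_apply[OF d(2)] cyc3_apply[OF d(3)] cyc3_apply[OF d(4)]
    cyc3_apply[OF d(5)] cyc3_apply[OF d(6)] cyc3_apply[OF d(7)]
  have neq: "a0 \<noteq> a1" "a0 \<noteq> a2" "a0 \<noteq> a3" "a0 \<noteq> a4" "a0 \<noteq> a5" "a1 \<noteq> a0" "a1 \<noteq> a2" "a1 \<noteq> a3" "a1 \<noteq> a4" "a1 \<noteq> a5" "a2 \<noteq> a0" "a2 \<noteq> a1" "a2 \<noteq> a3" "a2 \<noteq> a4" "a2 \<noteq> a5" "a3 \<noteq> a0" "a3 \<noteq> a1" "a3 \<noteq> a2" "a3 \<noteq> a4" "a3 \<noteq> a5" "a4 \<noteq> a0" "a4 \<noteq> a1" "a4 \<noteq> a2" "a4 \<noteq> a3" "a4 \<noteq> a5" "a5 \<noteq> a0" "a5 \<noteq> a1" "a5 \<noteq> a2" "a5 \<noteq> a3" "a5 \<noteq> a4" using assms by auto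
  consider "x = a0" | "x = a1" | "x = a2" | "x = a3" | "x = a4" | "x = a5" | "x \<notin> {a0,a1,a2,a3,a4,a5}" by auto
  then show "((cycle_of_list [a0,a1,a2] \<circ> cycle_of_list [a1,a2,a3] \<circ> cycle_of_list [a0,a2,a1] \<circ> cycle_of_list [a1,a3,a2]) \<circ>
         (cycle_of_list [a3,a4,a5] \<circ> (cycle_of_list [a0,a1,a2] \<circ> cycle_of_list [a1,a2,a3] \<circ> cycle_of_list [a0,a2,a1] \<circ> cycle_of_list [a1,a3,a2]) \<circ> cycle_of_list [a3,a5,a4])) x
       = cycle_of_list [a0,a4,a3] x"
    by cases (simp_all add: simps neq)
qed

lemma Dcalc5:
  assumes "distinct [a0,a1,a2,a3,a4]"
  shows "(cycle_of_list [a0,a1,a2] \<circ> cycle_of_list [a1,a2,a3] \<circ> cycle_of_list [a0,a2,a1] \<circ> cycle_of_list [a1,a3,a2]) \<circ>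
         (cycle_of_list [a3,a4,a0] \<circ> (cycle_of_list [a0,a1,a2] \<circ> cycle_of_list [a1,a2,a3] \<circ> cycle_of_list [a0,a2,a1] \<circ> cycle_of_list [a1,a3,a2]) \<circ> cycle_of_list [a3,a0,a4])
       = cycle_of_list [a0,a3,a4]"
proof (rule ext)
  fix x
  have d: "distinct [a0,a1,a2]" "distinct [a1,a2,a3]" "distinct [a0,a2,a1]" "distinct [a1,a3,a2]"
    "distinct [a3,a4,a0]" "distinct [a3,a0,a4]" "distinct [a0,a3,a4]" using assms by auto
  note simps = cyc3_apply[OF d(1)] cyc3_apply[OF d(2)] cyc3_apply[OF d(3)] cyc3_apply[OF d(4)]
    cyc3_apply[OF d(5)] cyc3_apply[OF d(6)] cyc3_apply[OF d(7)]
  have neq: "a0 \<noteq> a1" "a0 \<noteq> a2" "a0 \<noteq> a3" "a0 \<noteq> a4" "a1 \<noteq> a0" "a1 \<noteq> a2" "a1 \<noteq> a3" "a1 \<noteq> a4" "a2 \<noteq> a0" "a2 \<noteq> a1" "a2 \<noteq> a3" "a2 \<noteq> a4" "a3 \<noteq> a0" "a3 \<noteq> a1" "a3 \<noteq> a2" "a3 \<noteq> a4" "a4 \<noteq> a0" "a4 \<noteq> a1" "a4 \<noteq> a2" "a4 \<noteq> a3" using assms by auto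
  consider "x = a0" | "x = a1" | "x = a2" | "x = a3" | "x = a4" | "x \<notin> {a0,a1,a2,a3,a4}" by auto
  then show "((cycle_of_list [a0,a1,a2] \<circ> cycle_of_list [a1,a2,a3] \<circ> cycle_of_list [a0,a2,a1] \<circ> cycle_of_list [a1,a3,a2]) \<circ>
         (cycle_of_list [a3,a4,a0] \<circ> (cycle_of_list [a0,a1,a2] \<circ> cycle_of_list [a1,a2,a3] \<circ> cycle_of_list [a0,a2,a1] \<circ> cycle_of_list [a1,a3,a2]) \<circ> cycle_of_list [a3,a0,a4])) x
       = cycle_of_list [a0,a3,a4] x"
    by cases (simp_all add: simps neq)
qed

lemma cyc3_conjM:
  assumes comp: "\<And>\<sigma> \<tau>. \<sigma> \<in> M \<Longrightarrow> \<tau> \<in> M \<Longrightarrow> \<sigma> \<circ> \<tau> \<in> M"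
    and g: "cycle_of_list [u,v,w] \<in> M" "distinct [u,v,w]"
    and s: "cycle_of_list [x,y,z] \<in> M" "distinct [x,y,z]"
  shows "cycle_of_list [cycle_of_list [u,v,w] x, cycle_of_list [u,v,w] y, cycle_of_list [u,v,w] z] \<in> M"
proof -
  let ?g = "cycle_of_list [u,v,w]"
  have "?g \<circ> cycle_of_list [x,y,z] \<circ> (?g \<circ> ?g) \<in> M" using comp g s by blast
  moreover have "?g \<circ> ?g = inv' ?g" using cyc3_inv_sq[OF g(2)] by simp
  moreover have "?g \<circ> cycle_of_list [x,y,z] \<circ> inv' ?g = cycle_of_list [?g x, ?g y, ?g z]"
    by (rule cyc3_conj[OF bij_cycle s(2)])
  ultimately show ?thesis by simp
qed

lemma cyc3_distinct_img: "bij g \<Longrightarrow> distinct [x,y,z] \<Longrightarrow> distinct [g x, g y, g z]"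
  by (auto dest: bij_is_inj simp: inj_eq)

lemma all3:
  assumes comp: "\<And>\<sigma> \<tau>. \<sigma> \<in> M \<Longrightarrow> \<tau> \<in> M \<Longrightarrow> \<sigma> \<circ> \<tau> \<in> M"
    and xa1: "xa \<in> A" "xb \<in> A" "xa \<noteq> xb"
    and base: "\<And>k. k \<in> A \<Longrightarrow> k \<noteq> xa \<Longrightarrow> k \<noteq> xb \<Longrightarrow> cycle_of_list [xa,xb,k] \<in> M"
    and big: "\<And>a b c. \<exists>x\<in>A. x \<noteq> xa \<and> x \<noteq> a \<and> x \<noteq> b \<and> x \<noteq> c"
    and abc: "a \<in> A" "b \<in> A" "c \<in> A" "distinct [a,b,c]"
  shows "cycle_of_list [a,b,c] \<in> M"
proof -
  have S1: "cycle_of_list [xa,k,xb] \<in> M" if "k \<in> A" "k \<noteq> xa" "k \<noteq> xb" for k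
  proof -
    have d: "distinct [xa,xb,k]" using that xa1 by auto
    have "cycle_of_list [xa,xb,k] \<circ> cycle_of_list [xa,xb,k] \<in> M" using comp base that by blast
    then show ?thesis using cyc3_sq[OF d] by simp
  qed
  have S2: "cycle_of_list [xa,j,k] \<in> M" if "j \<in> A" "k \<in> A" "j \<noteq> xa" "k \<noteq> xa" "j \<noteq> k" for j k
  proof (cases "j = xb")
    case True then show ?thesis using base that by blast
  next
    case jn: False
    show ?thesis
    proof (cases "k = xb")
      case True then show ?thesis using S1 that jn by blast
    next
      case kn: False
      have dg: "distinct [xa,j,xb]" using that jn xa1 by auto
      have ds: "distinct [xa,xb,k]" using that kn xa1 by auto
      have "cycle_of_list [cycle_of_list [xa,j,xb] xa, cycle_of_list [xa,j,xb] xb, cycle_of_list [xa,j,xb] k] \<in> M"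
        by (rule cyc3_conjM[OF comp S1[OF that(1,3) jn] dg base[OF that(2,4) kn] ds])
      moreover have "cycle_of_list [xa,j,xb] xa = j" "cycle_of_list [xa,j,xb] xb = xa"
        "cycle_of_list [xa,j,xb] k = k" using dg that kn by (auto simp: cyc3_apply)
      ultimately have "cycle_of_list [j,xa,k] \<in> M" by simp
      moreover have d2: "distinct [xa,k,j]" using that by auto
      moreover have "cycle_of_list [j,xa,k] = cycle_of_list [xa,k,j]"
        using cyc3_rot[of j xa k] that by auto
      ultimately have "cycle_of_list [xa,k,j] \<circ> cycle_of_list [xa,k,j] \<in> M" using comp by simp
      then show ?thesis using cyc3_sq[OF d2] by simp
    qed
  qed
  show ?thesis
  proof (cases "xa \<in> {a,b,c}")
    case True
    then consider "a = xa" | "b = xa" | "c = xa" by auto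
    then show ?thesis
    proof cases
      case 1 then show ?thesis using S2[of b c] abc by auto
    next
      case 2
      then have "cycle_of_list [xa,c,a] \<in> M" using S2[of c a] abc by auto
      moreover have "cycle_of_list [a,b,c] = cycle_of_list [b,c,a]" using cyc3_rot[OF abc(4)] by simp
      ultimately show ?thesis using 2 by simp
    next
      case 3
      then have "cycle_of_list [xa,a,b] \<in> M" using S2[of a b] abc by auto
      moreover have "cycle_of_list [c,a,b] = cycle_of_list [a,b,c]" using cyc3_rot[of c a b] abc by auto
      ultimately show ?thesis using 3 by simp
    qed
  next
    case False
    obtain x where x: "x \<in> A" "x \<noteq> xa" "x \<noteq> a" "x \<noteq> b" "x \<noteq> c" using big by blast
    have dg: "distinct [xa,a,x]" using x False by auto
    have ds: "distinct [xa,b,c]" using abc False by auto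
    have g: "cycle_of_list [xa,a,x] \<in> M" using S2[of a x] abc x False by auto
    have s: "cycle_of_list [xa,b,c] \<in> M" using S2[of b c] abc False by auto
    have "cycle_of_list [cycle_of_list [xa,a,x] xa, cycle_of_list [xa,a,x] b, cycle_of_list [xa,a,x] c] \<in> M"
      by (rule cyc3_conjM[OF comp g dg s ds])
    moreover have "cycle_of_list [xa,a,x] xa = a" "cycle_of_list [xa,a,x] b = b"
        "cycle_of_list [xa,a,x] c = c" using dg abc x False by (auto simp: cyc3_apply)
    ultimately show ?thesis by simp
  qed
qed


declare upt_Suc [simp del]

definition rotp :: "nat \<Rightarrow> nat \<Rightarrow> nat" where "rotp p = cycle_of_list [1..<p+1]"

lemma rotp_apply: "rotp p x = (if 1 \<le> x \<and> x \<le> p then x mod p + 1 else x)"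
  unfolding rotp_def by (rule cycle_range_apply)

lemma permutation_rotp: "permutation (rotp p)"
  unfolding rotp_def by (rule permutation_of_cycle)

definition Pp :: "nat \<Rightarrow> nat \<Rightarrow> nat" where "Pp p t = t mod p + 1"

lemma alpha_pow:
  "(rotp p ^^ j) x = (if 1 \<le> x \<and> x \<le> p then (x - 1 + j) mod p + 1 else x)"
proof (induction j)
  case 0 then show ?case by auto
next
  case (Suc j)
  show ?case
  proof (cases "1 \<le> x \<and> x \<le> p")
    case True
    then have p0: "0 < p" by auto
    have "(rotp p ^^ Suc j) x = rotp p ((x - 1 + j) mod p + 1)"
      using Suc True by simp
    also have "\<dots> = ((x - 1 + j) mod p + 1) mod p + 1"
      using p0 by (simp add: rotp_apply Suc_leI)
    also have "((x - 1 + j) mod p + 1) mod p = (x - 1 + Suc j) mod p" by (simp add: mod_Suc_eq)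
    finally show ?thesis using True by simp
  next
    case False
    have "(rotp p ^^ j) x = x" using Suc.IH by (simp only: False if_False)
    then have "(rotp p ^^ Suc j) x = rotp p x" by simp
    also have "\<dots> = x" by (simp only: rotp_apply False if_False)
    finally show ?thesis by (simp only: False if_False)
  qed
qed

lemma alpha_pow_Pp: "0 < p \<Longrightarrow> (rotp p ^^ j) (Pp p t) = Pp p (t + j)"
proof -
  assume p: "0 < p"
  have "1 \<le> Pp p t \<and> Pp p t \<le> p" using p by (simp add: Pp_def Suc_leI)
  then have A: "(rotp p ^^ j) (Pp p t) = (Pp p t - 1 + j) mod p + 1"
    by (simp add: alpha_pow)
  have B: "Pp p t - 1 = t mod p" by (simp add: Pp_def)
  have "(rotp p ^^ j) (Pp p t) = (t mod p + j) mod p + 1" using A B by simp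
  then show ?thesis by (simp add: Pp_def mod_add_left_eq)
qed

lemma bij_alpha_pow: "bij (rotp p ^^ j)"
  using permutation_bijective permutation_funpow permutation_rotp by blast

lemma Pp_range: "0 < p \<Longrightarrow> 1 \<le> Pp p t \<and> Pp p t \<le> p"
  by (simp add: Pp_def Suc_leI)

lemma Pp_small: "t < p \<Longrightarrow> Pp p t = t + 1" by (simp add: Pp_def)

lemma Pp_eq_iff: "Pp p a = Pp p b \<longleftrightarrow> a mod p = b mod p" by (simp add: Pp_def)

lemma Pp_mod: "Pp p (a mod p) = Pp p a" by (simp add: Pp_def)

lemma Pp_period: "Pp p (a + p) = Pp p a" by (simp add: Pp_def)

lemma conj_alpha_beta:
  assumes p: "0 < p" and rp: "2 * r < p" and r1: "1 \<le> r"
  shows "(rotp p ^^ j) \<circ> cycle_of_list [1, 1 + r, 1 + 2 * r] \<circ> inv' (rotp p ^^ j)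
        = cycle_of_list [Pp p j, Pp p (r + j), Pp p (2 * r + j)]"
proof -
  let ?a = "rotp p ^^ j"
  have d: "distinct [1, 1 + r, 1 + 2 * r]" using r1 by auto
  have "?a \<circ> cycle_of_list [1, 1 + r, 1 + 2 * r] \<circ> inv' ?a = cycle_of_list [?a 1, ?a (1 + r), ?a (1 + 2 * r)]"
    by (rule cyc3_conj[OF bij_alpha_pow d])
  moreover have "?a 1 = Pp p j" using alpha_pow_Pp[OF p, of j 0] p by (simp add: Pp_def)
  moreover have "?a (1 + r) = Pp p (r + j)" using alpha_pow_Pp[OF p, of j r] rp by (simp add: Pp_small)
  moreover have "?a (1 + 2 * r) = Pp p (2 * r + j)" using alpha_pow_Pp[OF p, of j "2 * r"] rp by (simp add: Pp_small)
  ultimately show ?thesis by simp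
qed

definition Qp :: "nat \<Rightarrow> nat \<Rightarrow> nat \<Rightarrow> nat" where "Qp p r u = Pp p (u * r)"

lemma Qp_eq_iff:
  assumes p: "Factorial_Ring.prime p" and r: "0 < r" "r < p"
  shows "Qp p r u = Qp p r v \<longleftrightarrow> u mod p = v mod p"
proof -
  have key: "(u * r) mod p = (v * r) mod p \<longleftrightarrow> u mod p = v mod p" if uv: "v \<le> u" for u v
  proof -
    have "(u * r) mod p = (v * r) mod p \<longleftrightarrow> p dvd (u * r - v * r)"
      using uv by (intro mod_eq_dvd_iff_nat) simp
    also have "u * r - v * r = (u - v) * r" by (simp add: diff_mult_distrib)
    also have "p dvd (u - v) * r \<longleftrightarrow> p dvd (u - v) \<or> p dvd r" using p by (simp add: prime_dvd_mult_iff)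
    finally have A: "(u * r) mod p = (v * r) mod p \<longleftrightarrow> p dvd (u - v) \<or> p dvd r" .
    have B: "\<not> p dvd r" using r by (auto dest: dvd_imp_le)
    have C: "p dvd (u - v) \<longleftrightarrow> u mod p = v mod p" using uv by (simp add: mod_eq_dvd_iff_nat)
    show ?thesis using A B C by simp
  qed
  show ?thesis
  proof (cases "v \<le> u")
    case True then show ?thesis using key[OF True] by (simp add: Qp_def Pp_eq_iff)
  next
    case False then show ?thesis using key[of u v] by (auto simp: Qp_def Pp_eq_iff)
  qed
qed

lemma Qp_range: "0 < p \<Longrightarrow> Qp p r u \<in> {1..p}"
  using Pp_range by (simp add: Qp_def)

lemma Qp_surj:
  assumes p: "Factorial_Ring.prime p" and r: "0 < r" "r < p" and x: "x \<in> {1..p}"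
  shows "\<exists>u<p. Qp p r u = x"
proof -
  have p0: "0 < p" using r by simp
  have "inj_on (Qp p r) {..<p}" using Qp_eq_iff[OF p r] by (auto simp: inj_on_def)
  then have "card (Qp p r ` {..<p}) = p" by (simp add: card_image)
  moreover have "Qp p r ` {..<p} \<subseteq> {1..p}" using Qp_range[OF p0] by auto
  ultimately have "Qp p r ` {..<p} = {1..p}" by (simp add: card_subset_eq)
  then have "x \<in> Qp p r ` {..<p}" using x by simp
  then obtain u where "u < p" "x = Qp p r u" by auto
  then show ?thesis by blast
qed

lemma alpha_pow_Qp: "0 < p \<Longrightarrow> (rotp p ^^ (k * r)) (Qp p r u) = Qp p r (u + k)"
proof -
  assume p: "0 < p"
  have "(rotp p ^^ (k * r)) (Qp p r u) = Pp p (u * r + k * r)"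
    unfolding Qp_def by (rule alpha_pow_Pp[OF p])
  then show ?thesis by (simp add: Qp_def add_mult_distrib)
qed

lemma conj_T:
  assumes p: "0 < p" and rp: "2 * r < p" and r1: "1 \<le> r"
  shows "(rotp p ^^ (u * r)) \<circ> cycle_of_list [1, 1 + r, 1 + 2 * r] \<circ> inv' (rotp p ^^ (u * r))
        = cycle_of_list [Qp p r u, Qp p r (u + 1), Qp p r (u + 2)]"
proof -
  have a: "Qp p r u = Pp p (u * r)" "Qp p r (u + 1) = Pp p (r + u * r)" "Qp p r (u + 2) = Pp p (2 * r + u * r)"
    unfolding Qp_def by (rule refl) (rule arg_cong[where f="Pp p"], simp add: algebra_simps)+
  show ?thesis unfolding a by (rule conj_alpha_beta[OF p rp r1])
qed


declare cycle_of_list.simps [simp] upt_Suc [simp]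

context lampctx
begin

abbreviation conjs :: "(nat \<Rightarrow> nat \<Rightarrow> nat) set" where
  "conjs \<equiv> (\<Union>g\<in>carrier GG. (\<lambda>s. g \<otimes>\<^bsub>GG\<^esub> s \<otimes>\<^bsub>GG\<^esub> inv\<^bsub>GG\<^esub> g) ` {\<beta>})"

definition LL :: "(nat \<Rightarrow> nat \<Rightarrow> nat) set" where "LL = normal_closure GG {\<beta>}"

lemma LL_gen: "LL = generate GG conjs" by (simp add: LL_def normal_closure_def)

lemma conjs_eq: "conjs = {g \<otimes>\<^bsub>PA\<^esub> \<beta> \<otimes>\<^bsub>PA\<^esub> inv\<^bsub>PA\<^esub> g | g. g \<in> carrier GG}"
  using GG_inv by auto

lemma PA_in: "g \<in> carrier GG \<Longrightarrow> g \<in> carrier PA" using GG_sub by blast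

lemma conjs_sub: "conjs \<subseteq> carrier GG"
proof
  fix x assume "x \<in> conjs"
  then obtain g where g: "g \<in> carrier GG" "x = g \<otimes>\<^bsub>GG\<^esub> \<beta> \<otimes>\<^bsub>GG\<^esub> inv\<^bsub>GG\<^esub> g" by blast
  have "inv\<^bsub>GG\<^esub> g \<in> carrier GG" by (rule group.inv_closed[OF GG_group g(1)])
  then show "x \<in> carrier GG" using g beta_GG by (metis GG_m_closed)
qed

lemma LL_subgroup: "subgroup LL GG"
  unfolding LL_gen by (rule group.generate_is_subgroup[OF GG_group conjs_sub])

lemma LL_sub: "LL \<subseteq> carrier GG" using LL_subgroup subgroup.subset by blast

lemma LL_mult: "x \<in> LL \<Longrightarrow> y \<in> LL \<Longrightarrow> x \<otimes>\<^bsub>PA\<^esub> y \<in> LL"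
  using subgroup.m_closed[OF LL_subgroup] by simp

lemma LL_inv: "x \<in> LL \<Longrightarrow> inv\<^bsub>PA\<^esub> x \<in> LL"
  using subgroup.m_inv_closed[OF LL_subgroup] GG_inv LL_sub by fastforce

lemma LL_one: "\<one>\<^bsub>PA\<^esub> \<in> LL"
  using subgroup.one_closed[OF LL_subgroup] by simp

lemma conj_conj:
  assumes g: "g \<in> carrier PA" and g': "g' \<in> carrier PA"
  shows "g \<otimes>\<^bsub>PA\<^esub> (g' \<otimes>\<^bsub>PA\<^esub> \<beta> \<otimes>\<^bsub>PA\<^esub> inv\<^bsub>PA\<^esub> g') \<otimes>\<^bsub>PA\<^esub> inv\<^bsub>PA\<^esub> g
    = (g \<otimes>\<^bsub>PA\<^esub> g') \<otimes>\<^bsub>PA\<^esub> \<beta> \<otimes>\<^bsub>PA\<^esub> inv\<^bsub>PA\<^esub> (g \<otimes>\<^bsub>PA\<^esub> g')"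
proof -
  interpret P: group PA by (rule PA_group)
  show ?thesis using g g' beta_PA by (simp add: P.inv_mult_group P.m_assoc)
qed

lemma LL_conj_gen:
  assumes g: "g \<in> carrier GG" and x: "x \<in> generate GG conjs"
  shows "g \<otimes>\<^bsub>PA\<^esub> x \<otimes>\<^bsub>PA\<^esub> inv\<^bsub>PA\<^esub> g \<in> generate GG conjs"
  using x g
proof (induction arbitrary: g rule: generate.induct)
  case (one g)
  interpret P: group PA by (rule PA_group)
  have "g \<otimes>\<^bsub>PA\<^esub> \<one>\<^bsub>GG\<^esub> \<otimes>\<^bsub>PA\<^esub> inv\<^bsub>PA\<^esub> g = \<one>\<^bsub>GG\<^esub>" using PA_in[OF one] by simp
  then show ?case using generate.one[of GG conjs] by simp
next
  case (incl h g)
  then obtain g' where g': "g' \<in> carrier GG" "h = g' \<otimes>\<^bsub>PA\<^esub> \<beta> \<otimes>\<^bsub>PA\<^esub> inv\<^bsub>PA\<^esub> g'"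
    unfolding conjs_eq by blast
  have gg': "g \<otimes>\<^bsub>PA\<^esub> g' \<in> carrier GG" using GG_m_closed[OF incl(2) g'(1)] by simp
  have "g \<otimes>\<^bsub>PA\<^esub> h \<otimes>\<^bsub>PA\<^esub> inv\<^bsub>PA\<^esub> g = (g \<otimes>\<^bsub>PA\<^esub> g') \<otimes>\<^bsub>PA\<^esub> \<beta> \<otimes>\<^bsub>PA\<^esub> inv\<^bsub>PA\<^esub> (g \<otimes>\<^bsub>PA\<^esub> g')"
    unfolding g'(2) by (rule conj_conj[OF PA_in[OF incl(2)] PA_in[OF g'(1)]])
  then have "g \<otimes>\<^bsub>PA\<^esub> h \<otimes>\<^bsub>PA\<^esub> inv\<^bsub>PA\<^esub> g \<in> conjs" unfolding conjs_eq using gg' by blast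
  then show ?case by (rule generate.incl)
next
  case (inv h g)
  interpret P: group PA by (rule PA_group)
  obtain g' where g': "g' \<in> carrier GG" "h = g' \<otimes>\<^bsub>PA\<^esub> \<beta> \<otimes>\<^bsub>PA\<^esub> inv\<^bsub>PA\<^esub> g'"
    using inv(1) unfolding conjs_eq by blast
  have hG: "h \<in> carrier GG" using inv(1) conjs_sub by blast
  have gg': "g \<otimes>\<^bsub>PA\<^esub> g' \<in> carrier GG" using GG_m_closed[OF inv(2) g'(1)] by simp
  have "g \<otimes>\<^bsub>PA\<^esub> h \<otimes>\<^bsub>PA\<^esub> inv\<^bsub>PA\<^esub> g = (g \<otimes>\<^bsub>PA\<^esub> g') \<otimes>\<^bsub>PA\<^esub> \<beta> \<otimes>\<^bsub>PA\<^esub> inv\<^bsub>PA\<^esub> (g \<otimes>\<^bsub>PA\<^esub> g')"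
    unfolding g'(2) by (rule conj_conj[OF PA_in[OF inv(2)] PA_in[OF g'(1)]])
  then have c: "g \<otimes>\<^bsub>PA\<^esub> h \<otimes>\<^bsub>PA\<^esub> inv\<^bsub>PA\<^esub> g \<in> conjs" unfolding conjs_eq using gg' by blast
  have cG: "g \<otimes>\<^bsub>PA\<^esub> h \<otimes>\<^bsub>PA\<^esub> inv\<^bsub>PA\<^esub> g \<in> carrier GG" using c conjs_sub by blast
  have "inv\<^bsub>PA\<^esub> (g \<otimes>\<^bsub>PA\<^esub> h \<otimes>\<^bsub>PA\<^esub> inv\<^bsub>PA\<^esub> g) = g \<otimes>\<^bsub>PA\<^esub> inv\<^bsub>PA\<^esub> h \<otimes>\<^bsub>PA\<^esub> inv\<^bsub>PA\<^esub> g"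
    using PA_in[OF inv(2)] PA_in[OF hG] by (simp add: P.inv_mult_group P.m_assoc)
  moreover have "inv\<^bsub>GG\<^esub> (g \<otimes>\<^bsub>PA\<^esub> h \<otimes>\<^bsub>PA\<^esub> inv\<^bsub>PA\<^esub> g) \<in> generate GG conjs" by (rule generate.inv[OF c])
  ultimately show ?case using GG_inv[OF cG] GG_inv[OF hG] by simp
next
  case (eng h1 h2 g)
  interpret P: group PA by (rule PA_group)
  have h1: "h1 \<in> carrier PA" using eng(1) group.generate_in_carrier[OF GG_group conjs_sub] PA_in by blast
  have h2: "h2 \<in> carrier PA" using eng(2) group.generate_in_carrier[OF GG_group conjs_sub] PA_in by blast
  have gP: "g \<in> carrier PA" using PA_in[OF eng(5)] .
  have "g \<otimes>\<^bsub>PA\<^esub> (h1 \<otimes>\<^bsub>PA\<^esub> h2) \<otimes>\<^bsub>PA\<^esub> inv\<^bsub>PA\<^esub> g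
      = (g \<otimes>\<^bsub>PA\<^esub> h1 \<otimes>\<^bsub>PA\<^esub> inv\<^bsub>PA\<^esub> g) \<otimes>\<^bsub>PA\<^esub> (g \<otimes>\<^bsub>PA\<^esub> h2 \<otimes>\<^bsub>PA\<^esub> inv\<^bsub>PA\<^esub> g)"
  proof -
    have c: "inv\<^bsub>PA\<^esub> g \<otimes>\<^bsub>PA\<^esub> (g \<otimes>\<^bsub>PA\<^esub> y) = y" if "y \<in> carrier PA" for y
      using that gP by (simp add: P.m_assoc[symmetric])
    show ?thesis using h1 h2 gP c by (simp add: P.m_assoc)
  qed
  then show ?case using generate.eng[OF eng(3)[OF eng(5)] eng(4)[OF eng(5)]] by simp
qed

lemma LL_conj: "g \<in> carrier GG \<Longrightarrow> x \<in> LL \<Longrightarrow> g \<otimes>\<^bsub>PA\<^esub> x \<otimes>\<^bsub>PA\<^esub> inv\<^bsub>PA\<^esub> g \<in> LL"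
  using LL_conj_gen[of g x] unfolding LL_gen by simp

lemma conjb_LL: "g \<in> carrier GG \<Longrightarrow> g \<otimes>\<^bsub>PA\<^esub> \<beta> \<otimes>\<^bsub>PA\<^esub> inv\<^bsub>PA\<^esub> g \<in> LL"
proof -
  assume g: "g \<in> carrier GG"
  then have "g \<otimes>\<^bsub>GG\<^esub> \<beta> \<otimes>\<^bsub>GG\<^esub> inv\<^bsub>GG\<^esub> g \<in> conjs" by blast
  then have "g \<otimes>\<^bsub>GG\<^esub> \<beta> \<otimes>\<^bsub>GG\<^esub> inv\<^bsub>GG\<^esub> g \<in> LL" unfolding LL_gen by (rule generate.incl)
  then show ?thesis using GG_inv[OF g] by simp
qed

definition En :: "nat \<Rightarrow> (nat \<Rightarrow> nat) \<Rightarrow> nat \<Rightarrow> nat \<Rightarrow> nat" where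
  "En n \<sigma> = (\<lambda>i\<in>posnat. if i = n then \<sigma> else id)"

lemma id_alt: "id \<in> carrier (alt_group m)"
  using monoid.one_closed[OF group.is_monoid[OF grp_alt]] by (simp add: alt_group_one)

lemma En_PA: "n \<ge> 1 \<Longrightarrow> \<sigma> \<in> carrier (alt_group (d n)) \<Longrightarrow> En n \<sigma> \<in> carrier PA"
  unfolding PA_carrier En_def using id_alt by (intro PiE_I) auto

lemma En_mult: "En n \<sigma> \<otimes>\<^bsub>PA\<^esub> En n \<tau> = En n (\<sigma> \<circ> \<tau>)"
  unfolding PA_mult En_def by (intro restrict_ext) auto

lemma bij_inv_comp: "bij f \<Longrightarrow> f \<circ> inv' f = id"
  by (metis bij_is_surj surj_iff)

lemma PA_bij: "x \<in> carrier PA \<Longrightarrow> n \<ge> 1 \<Longrightarrow> bij (x n)"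
  using PA_perm permutes_bij by blast

lemma En_conj:
  assumes g: "g \<in> carrier PA" and n: "n \<ge> 1"
  shows "g \<otimes>\<^bsub>PA\<^esub> En n \<sigma> \<otimes>\<^bsub>PA\<^esub> inv\<^bsub>PA\<^esub> g = En n (g n \<circ> \<sigma> \<circ> inv' (g n))"
  unfolding PA_mult PA_inv[OF g] En_def
proof (intro restrict_ext)
  fix i assume i: "i \<in> posnat"
  show "(\<lambda>i\<in>posnat. g i \<circ> (\<lambda>i\<in>posnat. if i = n then \<sigma> else id) i) i \<circ> (\<lambda>i\<in>posnat. inv' (g i)) i =
        (if i = n then g n \<circ> \<sigma> \<circ> inv' (g n) else id)"
    using i bij_inv_comp[OF PA_bij[OF g, of i]] by auto
qed

definition MM :: "nat \<Rightarrow> (nat \<Rightarrow> nat) set" where "MM n = {\<sigma>. En n \<sigma> \<in> LL}"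

lemma MM_comp: "\<sigma> \<in> MM n \<Longrightarrow> \<tau> \<in> MM n \<Longrightarrow> \<sigma> \<circ> \<tau> \<in> MM n"
  unfolding MM_def using LL_mult En_mult by fastforce

lemma MM_conj:
  assumes n: "n \<ge> 1" and g: "g \<in> carrier GG" and s: "\<sigma> \<in> MM n"
  shows "g n \<circ> \<sigma> \<circ> inv' (g n) \<in> MM n"
proof -
  have gP: "g \<in> carrier PA" using g GG_sub by blast
  have "g \<otimes>\<^bsub>PA\<^esub> En n \<sigma> \<otimes>\<^bsub>PA\<^esub> inv\<^bsub>PA\<^esub> g \<in> LL" using LL_conj[OF g] s by (simp add: MM_def)
  then show ?thesis using En_conj[OF gP n] by (simp add: MM_def)
qed

lemma MM_cyc:
  assumes n: "n \<ge> 1" and g: "g \<in> carrier GG" and s: "cycle_of_list [x,y,z] \<in> MM n" and dxyz: "distinct [x,y,z]"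
  shows "cycle_of_list [g n x, g n y, g n z] \<in> MM n"
proof -
  have b: "bij (g n)" using PA_bij g GG_sub n by blast
  have "g n \<circ> cycle_of_list [x,y,z] \<circ> inv' (g n) = cycle_of_list [g n x, g n y, g n z]"
    by (rule cyc3_conj[OF b dxyz])
  then show ?thesis using MM_conj[OF n g s] by simp
qed

definition apow :: "nat \<Rightarrow> nat \<Rightarrow> nat \<Rightarrow> nat" where "apow j = \<alpha> [^]\<^bsub>PA\<^esub> j"

lemma apow_GG: "apow j \<in> carrier GG"
proof -
  have "\<alpha> [^]\<^bsub>GG\<^esub> j \<in> carrier GG"
    using monoid.nat_pow_closed[OF group.is_monoid[OF GG_group] alpha_GG] by simp
  then show ?thesis by (simp add: apow_def pow_subgroup_generated)
qed

lemma apow_n: "n \<ge> 1 \<Longrightarrow> apow j n = rotp (d n) ^^ j"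
proof (induction j)
  case 0
  then show ?case by (simp add: apow_def PA_one)
next
  case (Suc j)
  have "apow (Suc j) = apow j \<otimes>\<^bsub>PA\<^esub> \<alpha>"
    unfolding apow_def by (rule monoid.nat_pow_Suc[OF group.is_monoid[OF PA_group]])
  then have "apow (Suc j) n = apow j n \<circ> \<alpha> n" using Suc by (simp add: PA_mult)
  also have "\<alpha> n = rotp (d n)" using alpha_n[OF Suc(2)] by (simp add: rotp_def)
  finally show ?case using Suc by (simp add: fun_eq_iff funpow_swap1)
qed

definition cj :: "nat \<Rightarrow> nat \<Rightarrow> nat \<Rightarrow> nat" where
  "cj j = apow j \<otimes>\<^bsub>PA\<^esub> \<beta> \<otimes>\<^bsub>PA\<^esub> inv\<^bsub>PA\<^esub> (apow j)"

lemma cj_LL: "cj j \<in> LL" unfolding cj_def using conjb_LL[OF apow_GG] .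

lemma cj_GG: "cj j \<in> carrier GG" using cj_LL LL_sub by blast

lemma cj_n:
  assumes n: "n \<ge> 1"
  shows "cj j n = cycle_of_list [Pp (d n) j, Pp (d n) (r n + j), Pp (d n) (2 * r n + j)]"
proof -
  have aP: "apow j \<in> carrier PA" using apow_GG GG_sub by blast
  have "cj j n = apow j n \<circ> \<beta> n \<circ> inv' (apow j n)"
    using n aP by (simp add: cj_def PA_mult PA_inv)
  also have "\<dots> = rotp (d n) ^^ j \<circ> cycle_of_list [1, 1 + r n, 1 + 2 * r n] \<circ> inv' (rotp (d n) ^^ j)"
    using apow_n[OF n] beta_n[OF n] by simp
  also have "\<dots> = cycle_of_list [Pp (d n) j, Pp (d n) (r n + j), Pp (d n) (2 * r n + j)]"
    using conj_alpha_beta[of "d n" "r n" j] d_pos[OF n] rd[OF n] r_pos[OF n] by (simp add: rotp_def)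
  finally show ?thesis .
qed

end

context lampctx
begin

lemma PA_ext: "x \<in> carrier PA \<Longrightarrow> y \<in> carrier PA \<Longrightarrow> (\<And>i. i \<ge> 1 \<Longrightarrow> x i = y i) \<Longrightarrow> x = y"
  unfolding PA_carrier by (rule PiE_ext) auto

lemma PA_mult_n: "n \<ge> 1 \<Longrightarrow> (x \<otimes>\<^bsub>PA\<^esub> y) n = x n \<circ> y n" by (simp add: PA_mult)

lemma PA_inv_n: "x \<in> carrier PA \<Longrightarrow> n \<ge> 1 \<Longrightarrow> (inv\<^bsub>PA\<^esub> x) n = inv' (x n)" by (simp add: PA_inv)

lemma En_n: "i \<ge> 1 \<Longrightarrow> En n \<sigma> i = (if i = n then \<sigma> else id)" by (simp add: En_def)

lemma fin_supp_LL:
  assumes fin: "finite S" and Sp: "S \<subseteq> posnat"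
    and hyp: "\<And>i \<sigma>. i \<in> S \<Longrightarrow> \<sigma> \<in> carrier (alt_group (d i)) \<Longrightarrow> En i \<sigma> \<in> LL"
  shows "x \<in> carrier PA \<Longrightarrow> (\<forall>i\<in>posnat - S. x i = id) \<Longrightarrow> x \<in> LL"
  using fin Sp hyp
proof (induction S arbitrary: x rule: finite_induct)
  case empty
  have "x = \<one>\<^bsub>PA\<^esub>"
    by (rule PA_ext[OF empty(1) PA_one_closed]) (use empty(2) in \<open>auto simp: PA_one id_def\<close>)
  then show ?case using LL_one by simp
next
  case (insert s S x)
  have Sp': "insert s S \<subseteq> posnat" and hyp': "\<And>i \<sigma>. i \<in> insert s S \<Longrightarrow> \<sigma> \<in> carrier (alt_group (d i)) \<Longrightarrow> En i \<sigma> \<in> LL"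
    and xP: "x \<in> carrier PA" and xo: "\<forall>i\<in>posnat - insert s S. x i = id" using insert.prems by auto
  have s1: "s \<ge> 1" using Sp' by auto
  define x' where "x' = (\<lambda>i\<in>posnat. if i = s then id else x i)"
  have xs: "x s \<in> carrier (alt_group (d s))" using PA_mem[OF xP s1] .
  have x'P: "x' \<in> carrier PA"
    unfolding x'_def PA_carrier using xP id_alt by (intro PiE_I) (auto simp: PA_carrier)
  have "x' \<in> LL"
  proof (rule insert.IH[OF x'P])
    show "S \<subseteq> posnat" using Sp' by auto
    show "\<And>i \<sigma>. i \<in> S \<Longrightarrow> \<sigma> \<in> carrier (alt_group (d i)) \<Longrightarrow> En i \<sigma> \<in> LL" using hyp' by auto
    show "\<forall>i\<in>posnat - S. x' i = id" using xo by (auto simp: x'_def)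
  qed
  moreover have "En s (x s) \<in> LL" using hyp' xs by auto
  moreover have "x = En s (x s) \<otimes>\<^bsub>PA\<^esub> x'"
  proof (rule PA_ext[OF xP])
    show "En s (x s) \<otimes>\<^bsub>PA\<^esub> x' \<in> carrier PA"
      using PA_m_closed En_PA[OF s1 xs] x'P by blast
    fix i :: nat assume i: "i \<ge> 1"
    show "x i = (En s (x s) \<otimes>\<^bsub>PA\<^esub> x') i" using i by (simp add: PA_mult_n En_n x'_def)
  qed
  ultimately show ?case by (metis LL_mult)
qed

lemma r_less: "1 \<le> n \<Longrightarrow> n < i \<Longrightarrow> r n < r i"
  using r_mono by (simp add: strict_mono_on_def)

lemma disj_cycles:
  assumes ri: "rr < R" "0 < rr" "3 * R \<le> p"
  shows "set [1, 1 + R, 1 + 2 * R] \<inter> set [Pp p rr, Pp p (R + rr), Pp p (2 * R + rr)] = {}"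
proof -
  have a: "Pp p rr = rr + 1" "Pp p (R + rr) = R + rr + 1" "Pp p (2 * R + rr) = 2 * R + rr + 1"
    using ri by (simp_all add: Pp_small)
  show ?thesis unfolding a using ri by auto
qed

definition Dn :: "nat \<Rightarrow> nat \<Rightarrow> nat" where
  "Dn n = cycle_of_list [Qp (d n) (r n) 0, Qp (d n) (r n) 1, Qp (d n) (r n) 2] \<circ>
          cycle_of_list [Qp (d n) (r n) 1, Qp (d n) (r n) 2, Qp (d n) (r n) 3] \<circ>
          cycle_of_list [Qp (d n) (r n) 0, Qp (d n) (r n) 2, Qp (d n) (r n) 1] \<circ>
          cycle_of_list [Qp (d n) (r n) 1, Qp (d n) (r n) 3, Qp (d n) (r n) 2]"

lemma Qp_distinct: "n \<ge> 1 \<Longrightarrow> u < d n \<Longrightarrow> v < d n \<Longrightarrow> u \<noteq> v \<Longrightarrow> Qp (d n) (r n) u \<noteq> Qp (d n) (r n) v"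
proof -
  assume n: "n \<ge> 1" and uv: "u < d n" "v < d n" "u \<noteq> v"
  have p: "Factorial_Ring.prime (d n)" using d_prime[OF n] by blast
  have rr: "0 < r n" "r n < d n" using r_pos[OF n] rd[OF n] by linarith+
  show ?thesis using Qp_eq_iff[OF p rr, of u v] uv by simp
qed

lemma Qp_small: "n \<ge> 1 \<Longrightarrow> u < 3 \<Longrightarrow> Qp (d n) (r n) u = 1 + u * r n"
proof -
  assume n: "n \<ge> 1" and u: "u < 3"
  have "u * r n \<le> 2 * r n" using u by simp
  then have "u * r n < d n" using rd[OF n] r_pos[OF n] by linarith
  then show ?thesis by (simp add: Qp_def Pp_small)
qed

lemma D_in_MM:
  assumes n: "n \<ge> 1"
    and IH: "\<And>i \<sigma>. 1 \<le> i \<Longrightarrow> i < n \<Longrightarrow> \<sigma> \<in> carrier (alt_group (d i)) \<Longrightarrow> En i \<sigma> \<in> LL"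
  shows "Dn n \<in> MM n"
proof -
  let ?c = "cj (r n)"
  define y where "y = \<beta> \<otimes>\<^bsub>PA\<^esub> ?c \<otimes>\<^bsub>PA\<^esub> inv\<^bsub>PA\<^esub> \<beta> \<otimes>\<^bsub>PA\<^esub> inv\<^bsub>PA\<^esub> ?c"
  have bL: "\<beta> \<in> LL"
  proof -
    interpret P: group PA by (rule PA_group)
    have "\<one>\<^bsub>PA\<^esub> \<otimes>\<^bsub>PA\<^esub> \<beta> \<otimes>\<^bsub>PA\<^esub> inv\<^bsub>PA\<^esub> \<one>\<^bsub>PA\<^esub> \<in> LL"
      using conjb_LL[of "\<one>\<^bsub>PA\<^esub>"] monoid.one_closed[OF group.is_monoid[OF GG_group]] by simp
    then show ?thesis using beta_PA by simp
  qed
  have cP: "?c \<in> carrier PA" using cj_GG GG_sub by blast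
  have yL: "y \<in> LL" unfolding y_def using bL cj_LL LL_mult LL_inv by simp
  have yP: "y \<in> carrier PA" using yL LL_sub GG_sub by blast
  have yi: "y i = \<beta> i \<circ> ?c i \<circ> inv' (\<beta> i) \<circ> inv' (?c i)" if "i \<ge> 1" for i
    using that beta_PA cP PA_m_closed group.inv_closed[OF PA_group] by (simp add: y_def PA_mult_n PA_inv_n)
  have y_big: "y i = id" if i: "n < i" for i
  proof -
    have i1: "i \<ge> 1" using i n by simp
    have rl: "r n < r i" using r_less[OF n i] .
    have disj: "set [1, 1 + r i, 1 + 2 * r i] \<inter> set [Pp (d i) (r n), Pp (d i) (r i + r n), Pp (d i) (2 * r i + r n)] = {}"
      by (rule disj_cycles) (use rl r_pos[OF n] rd[OF i1] in auto)
    have d1: "distinct [1, 1 + r i, 1 + 2 * r i]" using r_pos[OF i1] by auto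
    have d2: "distinct [Pp (d i) (r n), Pp (d i) (r i + r n), Pp (d i) (2 * r i + r n)]"
      using rl rd[OF i1] r_pos[OF n] by (simp add: Pp_small)
    have bi: "\<beta> i = cycle_of_list [1, 1 + r i, 1 + 2 * r i]" using beta_n[OF i1] .
    have ci: "?c i = cycle_of_list [Pp (d i) (r n), Pp (d i) (r i + r n), Pp (d i) (2 * r i + r n)]"
      using cj_n[OF i1] .
    have comm: "\<beta> i \<circ> ?c i = ?c i \<circ> \<beta> i" unfolding bi ci by (rule cycles_commute[OF d1 d2 disj])
    have "y i = ?c i \<circ> (\<beta> i \<circ> inv' (\<beta> i)) \<circ> inv' (?c i)" using yi[OF i1] comm by (simp add: comp_assoc)
    also have "\<beta> i \<circ> inv' (\<beta> i) = id" using bij_inv_comp PA_bij[OF beta_PA i1] by blast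
    also have "?c i \<circ> id \<circ> inv' (?c i) = id" using bij_inv_comp PA_bij[OF cP i1] by simp
    finally show ?thesis .
  qed
  define z where "z = (\<lambda>i\<in>posnat. if i < n then y i else id)"
  have zP: "z \<in> carrier PA"
    unfolding z_def PA_carrier using yP id_alt by (intro PiE_I) (auto simp: PA_carrier)
  have zL: "z \<in> LL"
  proof (rule fin_supp_LL[of "{1..<n}"])
    show "\<And>i \<sigma>. i \<in> {1..<n} \<Longrightarrow> \<sigma> \<in> carrier (alt_group (d i)) \<Longrightarrow> En i \<sigma> \<in> LL" using IH by auto
  qed (use zP in \<open>auto simp: z_def\<close>)
  have "y \<otimes>\<^bsub>PA\<^esub> inv\<^bsub>PA\<^esub> z = En n (y n)"
  proof (rule PA_ext)
    show "y \<otimes>\<^bsub>PA\<^esub> inv\<^bsub>PA\<^esub> z \<in> carrier PA" using yP zP PA_m_closed group.inv_closed[OF PA_group] by blast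
    show "En n (y n) \<in> carrier PA" using En_PA[OF n] PA_mem[OF yP n] by blast
    fix i :: nat assume i: "i \<ge> 1"
    have zi: "z i = (if i < n then y i else id)" using i by (simp add: z_def)
    show "(y \<otimes>\<^bsub>PA\<^esub> inv\<^bsub>PA\<^esub> z) i = En n (y n) i"
    proof (cases "i < n")
      case True
      then show ?thesis using i zi PA_inv_n[OF zP i] bij_inv_comp[OF PA_bij[OF yP i]]
        by (simp add: PA_mult_n En_n)
    next
      case False
      then have "inv' (z i) = id" using zi by (simp add: inv_id)
      then show ?thesis using i zi PA_inv_n[OF zP i] y_big False
        by (auto simp: PA_mult_n En_n)
    qed
  qed
  moreover have "y \<otimes>\<^bsub>PA\<^esub> inv\<^bsub>PA\<^esub> z \<in> LL" using yL zL LL_mult LL_inv by simp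
  ultimately have yM: "y n \<in> MM n" by (simp add: MM_def)
  have "y n = Dn n"
  proof -
    let ?Q = "Qp (d n) (r n)"
    have dn: "0 < d n" "2 * r n < d n" "1 \<le> r n" using d_pos[OF n] rd[OF n] r_pos[OF n] by auto
    have q: "?Q 0 = 1" "?Q 1 = 1 + r n" "?Q 2 = 1 + 2 * r n"
      using Qp_small[OF n] by auto
    have b: "\<beta> n = cycle_of_list [?Q 0, ?Q 1, ?Q 2]" using beta_n[OF n] q by simp
    have c: "?c n = cycle_of_list [?Q 1, ?Q 2, ?Q 3]"
    proof -
      have "?c n = cycle_of_list [Pp (d n) (r n), Pp (d n) (r n + r n), Pp (d n) (2 * r n + r n)]"
        using cj_n[OF n] .
      moreover have "Pp (d n) (r n) = ?Q 1" "Pp (d n) (r n + r n) = ?Q 2" "Pp (d n) (2 * r n + r n) = ?Q 3"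
        unfolding Qp_def by (rule arg_cong[where f="Pp (d n)"], simp)+
      ultimately show ?thesis by simp
    qed
    have dd: "distinct [?Q 0, ?Q 1, ?Q 2]" "distinct [?Q 1, ?Q 2, ?Q 3]"
      using Qp_distinct[OF n] d_prime[OF n] by (auto simp: eval_nat_numeral)
    have "y n = \<beta> n \<circ> ?c n \<circ> inv' (\<beta> n) \<circ> inv' (?c n)" using yi[OF n] .
    also have "\<dots> = Dn n" unfolding b c Dn_def cyc3_inv[OF dd(1)] cyc3_inv[OF dd(2)] ..
    finally show ?thesis .
  qed
  then show ?thesis using yM by simp
qed

end

context lampctx
begin

lemma Q_per: "Qp p rr (u + p) = Qp p rr u"
  by (simp add: Qp_def Pp_def add_mult_distrib)

lemma Q_ne: "n \<ge> 1 \<Longrightarrow> u mod d n \<noteq> v mod d n \<Longrightarrow> Qp (d n) (r n) u \<noteq> Qp (d n) (r n) v"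
proof -
  assume n: "n \<ge> 1" and uv: "u mod d n \<noteq> v mod d n"
  have p: "Factorial_Ring.prime (d n)" using d_prime[OF n] by blast
  have rr: "0 < r n" "r n < d n" using r_pos[OF n] rd[OF n] by linarith+
  show ?thesis using Qp_eq_iff[OF p rr, of u v] uv by simp
qed

lemma Q_in: "n \<ge> 1 \<Longrightarrow> Qp (d n) (r n) u \<in> {1..d n}"
  using Qp_range d_pos by blast

lemma T_n: "n \<ge> 1 \<Longrightarrow> cj (u * r n) n = cycle_of_list [Qp (d n) (r n) u, Qp (d n) (r n) (u + 1), Qp (d n) (r n) (u + 2)]"
proof -
  assume n: "n \<ge> 1"
  have "cj (u * r n) n = cycle_of_list [Pp (d n) (u * r n), Pp (d n) (r n + u * r n), Pp (d n) (2 * r n + u * r n)]"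
    using cj_n[OF n] .
  moreover have "Pp (d n) (u * r n) = Qp (d n) (r n) u" "Pp (d n) (r n + u * r n) = Qp (d n) (r n) (u + 1)"
    "Pp (d n) (2 * r n + u * r n) = Qp (d n) (r n) (u + 2)"
    unfolding Qp_def by (rule refl) (rule arg_cong[where f="Pp (d n)"], simp add: algebra_simps)+
  ultimately show ?thesis by simp
qed

lemma shift_n: "n \<ge> 1 \<Longrightarrow> apow (k * r n) n (Qp (d n) (r n) u) = Qp (d n) (r n) (u + k)"
  using apow_n alpha_pow_Qp d_pos by simp

lemma t_in_MM:
  assumes n: "n \<ge> 1" and D: "Dn n \<in> MM n"
  shows "cycle_of_list [Qp (d n) (r n) 0, Qp (d n) (r n) 1, Qp (d n) (r n) (d n - 3)] \<in> MM n"
proof -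
  let ?Q = "Qp (d n) (r n)" and ?p = "d n"
  have p5: "?p \<ge> 5" using d_prime[OF n] by blast
  have d345: "distinct [?Q 3, ?Q 4, ?Q 5]"
  proof -
    have m: "3 mod ?p = 3" "4 mod ?p = 4" using p5 by auto
    have "5 mod ?p = 0 \<or> 5 mod ?p = 5" using p5 by (cases "?p = 5") auto
    then have "3 mod ?p \<noteq> 4 mod ?p" "3 mod ?p \<noteq> 5 mod ?p" "4 mod ?p \<noteq> 5 mod ?p"
      using m by auto
    then show ?thesis using Q_ne[OF n] by auto
  qed
  have T3: "cj (3 * r n) n = cycle_of_list [?Q 3, ?Q 4, ?Q 5]" using T_n[OF n, of 3] by simp
  have "cj (3 * r n) n \<circ> Dn n \<circ> inv' (cj (3 * r n) n) \<in> MM n" by (rule MM_conj[OF n cj_GG D])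
  then have D': "cycle_of_list [?Q 3, ?Q 4, ?Q 5] \<circ> Dn n \<circ> cycle_of_list [?Q 3, ?Q 5, ?Q 4] \<in> MM n"
    unfolding T3 cyc3_inv[OF d345] .
  have tM: "Dn n \<circ> (cycle_of_list [?Q 3, ?Q 4, ?Q 5] \<circ> Dn n \<circ> cycle_of_list [?Q 3, ?Q 5, ?Q 4]) \<in> MM n"
    by (rule MM_comp[OF D D'])
  let ?g = "apow ((?p - 3) * r n)"
  have gQ: "?g n (?Q u) = ?Q (u + (?p - 3))" for u using shift_n[OF n] .
  have per: "?Q (u + ?p) = ?Q u" for u by (rule Q_per)
  show ?thesis
  proof (cases "?p = 5")
    case True
    have q5: "?Q 5 = ?Q 0" using per[of 0] True by simp
    have dist: "distinct [?Q 0, ?Q 1, ?Q 2, ?Q 3, ?Q 4]"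
      using Qp_distinct[OF n] True by (auto simp: eval_nat_numeral)
    have "Dn n \<circ> (cycle_of_list [?Q 3, ?Q 4, ?Q 0] \<circ> Dn n \<circ> cycle_of_list [?Q 3, ?Q 0, ?Q 4]) = cycle_of_list [?Q 0, ?Q 3, ?Q 4]"
      unfolding Dn_def by (rule Dcalc5[OF dist])
    then have t: "cycle_of_list [?Q 0, ?Q 3, ?Q 4] \<in> MM n" using tM q5 by simp
    have dt: "distinct [?Q 0, ?Q 3, ?Q 4]" using dist by auto
    have "cycle_of_list [?g n (?Q 0), ?g n (?Q 3), ?g n (?Q 4)] \<in> MM n"
      by (rule MM_cyc[OF n apow_GG t dt])
    moreover have "?g n (?Q 0) = ?Q 2" "?g n (?Q 3) = ?Q 0" "?g n (?Q 4) = ?Q 1"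
      using gQ[of 0] gQ[of 3] gQ[of 4] per[of 0] per[of 1] True by (simp_all add: numeral_2_eq_2)
    ultimately have "cycle_of_list [?Q 2, ?Q 0, ?Q 1] \<in> MM n" by simp
    moreover have "cycle_of_list [?Q 2, ?Q 0, ?Q 1] = cycle_of_list [?Q 0, ?Q 1, ?Q 2]"
      using cyc3_rot[of "?Q 2" "?Q 0" "?Q 1"] dist by auto
    ultimately show ?thesis using True by simp
  next
    case False
    then have p6: "?p \<ge> 6" using p5 by simp
    have dist: "distinct [?Q 0, ?Q 1, ?Q 2, ?Q 3, ?Q 4, ?Q 5]"
      using Qp_distinct[OF n] p6 by (auto simp: eval_nat_numeral)
    have "Dn n \<circ> (cycle_of_list [?Q 3, ?Q 4, ?Q 5] \<circ> Dn n \<circ> cycle_of_list [?Q 3, ?Q 5, ?Q 4]) = cycle_of_list [?Q 0, ?Q 4, ?Q 3]"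
      unfolding Dn_def by (rule Dcalc7[OF dist])
    then have t: "cycle_of_list [?Q 0, ?Q 4, ?Q 3] \<in> MM n" using tM by simp
    have dt: "distinct [?Q 0, ?Q 4, ?Q 3]" using dist by auto
    have "cycle_of_list [?g n (?Q 0), ?g n (?Q 4), ?g n (?Q 3)] \<in> MM n"
      by (rule MM_cyc[OF n apow_GG t dt])
    moreover have "?g n (?Q 0) = ?Q (?p - 3)" using gQ[of 0] by simp
    moreover have "?g n (?Q 4) = ?Q 1"
    proof -
      have "4 + (?p - 3) = 1 + ?p" using p6 by simp
      then show ?thesis using gQ[of 4] per[of 1] by simp
    qed
    moreover have "?g n (?Q 3) = ?Q 0"
    proof -
      have "3 + (?p - 3) = 0 + ?p" using p6 by simp
      then show ?thesis using gQ[of 3] per[of 0] by simp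
    qed
    ultimately have c: "cycle_of_list [?Q (?p - 3), ?Q 1, ?Q 0] \<in> MM n" by simp
    have dq: "distinct [?Q 0, ?Q 1, ?Q (?p - 3)]" using Qp_distinct[OF n] p6 by auto
    have "cycle_of_list [?Q (?p - 3), ?Q 1, ?Q 0] = cycle_of_list [?Q 0, ?Q (?p - 3), ?Q 1]"
      using cyc3_rot[of "?Q 0" "?Q (?p - 3)" "?Q 1"] dq by auto
    then have c2: "cycle_of_list [?Q 0, ?Q (?p - 3), ?Q 1] \<in> MM n" using c by simp
    have "cycle_of_list [?Q 0, ?Q (?p - 3), ?Q 1] \<circ> cycle_of_list [?Q 0, ?Q (?p - 3), ?Q 1] \<in> MM n"
      by (rule MM_comp[OF c2 c2])
    moreover have "distinct [?Q 0, ?Q (?p - 3), ?Q 1]" using dq by auto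
    ultimately show ?thesis using cyc3_sq by metis
  qed
qed

end

declare cycle_of_list.simps [simp del]

context lampctx
begin

lemma T_move:
  assumes n: "n \<ge> 1" and u: "2 \<le> u" "u + 2 < d n" and v: "v \<in> {u, u+1, u+2}"
    and m: "cycle_of_list [Qp (d n) (r n) 0, Qp (d n) (r n) 1, Qp (d n) (r n) v] \<in> MM n"
  shows "cycle_of_list [Qp (d n) (r n) 0, Qp (d n) (r n) 1,
           cycle_of_list [Qp (d n) (r n) u, Qp (d n) (r n) (u+1), Qp (d n) (r n) (u+2)] (Qp (d n) (r n) v)] \<in> MM n"
proof -
  let ?Q = "Qp (d n) (r n)"
  let ?T = "cycle_of_list [?Q u, ?Q (u+1), ?Q (u+2)]"
  have dT: "distinct [?Q u, ?Q (u+1), ?Q (u+2)]" using Qp_distinct[OF n] u by auto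
  have dm: "distinct [?Q 0, ?Q 1, ?Q v]" using Qp_distinct[OF n] u v by auto
  have T: "cj (u * r n) n = ?T" by (rule T_n[OF n])
  have "cycle_of_list [cj (u * r n) n (?Q 0), cj (u * r n) n (?Q 1), cj (u * r n) n (?Q v)] \<in> MM n"
    by (rule MM_cyc[OF n cj_GG m dm])
  moreover have "?T (?Q 0) = ?Q 0" "?T (?Q 1) = ?Q 1"
  proof -
    have ne: "?Q 0 \<noteq> ?Q u" "?Q 0 \<noteq> ?Q (u+1)" "?Q 0 \<noteq> ?Q (u+2)"
      "?Q 1 \<noteq> ?Q u" "?Q 1 \<noteq> ?Q (u+1)" "?Q 1 \<noteq> ?Q (u+2)"
      using Qp_distinct[OF n] u by auto
    show "?T (?Q 0) = ?Q 0" unfolding cyc3_apply[OF dT] using ne by simp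
    show "?T (?Q 1) = ?Q 1" unfolding cyc3_apply[OF dT] using ne by simp
  qed
  ultimately show ?thesis unfolding T by simp
qed

lemma G0:
  assumes n: "n \<ge> 1" and K: "cycle_of_list [Qp (d n) (r n) 0, Qp (d n) (r n) 1, Qp (d n) (r n) (d n - 3)] \<in> MM n"
  shows "2 \<le> k \<Longrightarrow> k < d n \<Longrightarrow> cycle_of_list [Qp (d n) (r n) 0, Qp (d n) (r n) 1, Qp (d n) (r n) k] \<in> MM n"
proof -
  let ?Q = "Qp (d n) (r n)" and ?p = "d n"
  have p5: "?p \<ge> 5" using d_prime[OF n] by blast
  have dist3: "distinct [?Q a, ?Q b, ?Q c]" if "a < ?p" "b < ?p" "c < ?p" "a \<noteq> b" "a \<noteq> c" "b \<noteq> c" for a b c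
    using Qp_distinct[OF n] that by auto
  have up: "cycle_of_list [?Q 0, ?Q 1, ?Q (k+1)] \<in> MM n"
    if k: "3 \<le> k" "k + 1 < ?p" and m: "cycle_of_list [?Q 0, ?Q 1, ?Q k] \<in> MM n" for k
  proof -
    have "cycle_of_list [?Q 0, ?Q 1, cycle_of_list [?Q (k-1), ?Q (k-1+1), ?Q (k-1+2)] (?Q k)] \<in> MM n"
      by (rule T_move[OF n]) (use k m in auto)
    moreover have "cycle_of_list [?Q (k-1), ?Q (k-1+1), ?Q (k-1+2)] (?Q k) = ?Q (k+1)"
    proof -
      have e: "k - 1 + 1 = k" "k - 1 + 2 = k + 1" using k by auto
      have "distinct [?Q (k-1), ?Q k, ?Q (k+1)]" by (rule dist3) (use k in auto)
      then show ?thesis unfolding e by (simp add: cyc3_apply)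
    qed
    ultimately show ?thesis by simp
  qed
  have down: "cycle_of_list [?Q 0, ?Q 1, ?Q (k-1)] \<in> MM n"
    if k: "3 \<le> k" "k + 1 < ?p" and m: "cycle_of_list [?Q 0, ?Q 1, ?Q k] \<in> MM n" for k
  proof -
    have e: "k - 1 + 1 = k" "k - 1 + 2 = k + 1" using k by auto
    have dd: "distinct [?Q (k-1), ?Q k, ?Q (k+1)]" by (rule dist3) (use k in auto)
    have m1: "cycle_of_list [?Q 0, ?Q 1, ?Q (k+1)] \<in> MM n" using up[OF k m] .
    have "cycle_of_list [?Q 0, ?Q 1, cycle_of_list [?Q (k-1), ?Q (k-1+1), ?Q (k-1+2)] (?Q (k+1))] \<in> MM n"
      by (rule T_move[OF n]) (use k m1 in auto)
    moreover have "cycle_of_list [?Q (k-1), ?Q (k-1+1), ?Q (k-1+2)] (?Q (k+1)) = ?Q (k-1)"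
      unfolding e using dd by (simp add: cyc3_apply)
    ultimately show ?thesis by simp
  qed
  have D: "cycle_of_list [?Q 0, ?Q 1, ?Q (?p - 3 - j)] \<in> MM n" if "j \<le> ?p - 5" for j
    using that
  proof (induction j)
    case 0 then show ?case using K by simp
  next
    case (Suc j)
    have k: "3 \<le> ?p - 3 - j" "?p - 3 - j + 1 < ?p" using Suc(2) p5 by auto
    have "cycle_of_list [?Q 0, ?Q 1, ?Q (?p - 3 - j - 1)] \<in> MM n"
      by (rule down[OF k]) (use Suc in simp)
    moreover have "?p - 3 - j - 1 = ?p - 3 - Suc j" by simp
    ultimately show ?case by simp
  qed
  have two: "cycle_of_list [?Q 0, ?Q 1, ?Q 2] \<in> MM n"
  proof -
    have "?p - 3 - (?p - 5) = 2" using p5 by simp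
    then show ?thesis using D[of "?p - 5"] by simp
  qed
  have three: "cycle_of_list [?Q 0, ?Q 1, ?Q 3] \<in> MM n"
  proof -
    have "cycle_of_list [?Q 0, ?Q 1, cycle_of_list [?Q 2, ?Q (2+1), ?Q (2+2)] (?Q 2)] \<in> MM n"
      by (rule T_move[OF n]) (use p5 two in auto)
    moreover have "distinct [?Q 2, ?Q 3, ?Q 4]" by (rule dist3) (use p5 in auto)
    ultimately show ?thesis by (simp add: cyc3_apply)
  qed
  have U: "cycle_of_list [?Q 0, ?Q 1, ?Q (2 + m)] \<in> MM n" if "2 + m < ?p" for m
    using that
  proof (induction m)
    case 0 then show ?case using two by simp
  next
    case (Suc m)
    show ?case
    proof (cases "m = 0")
      case True then show ?thesis using three by (simp add: numeral_3_eq_3)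
    next
      case False
      have "cycle_of_list [?Q 0, ?Q 1, ?Q (2 + m + 1)] \<in> MM n"
        by (rule up) (use False Suc in auto)
      then show ?thesis by simp
    qed
  qed
  assume k: "2 \<le> k" "k < ?p"
  then obtain m where m: "k = 2 + m" by (metis le_add_diff_inverse)
  then show ?thesis using U[of m] k by simp
qed

lemma three_cycles_MM:
  assumes n: "n \<ge> 1" and D: "Dn n \<in> MM n"
  shows "three_cycles (d n) \<subseteq> MM n"
proof
  let ?Q = "Qp (d n) (r n)" and ?p = "d n"
  have p5: "?p \<ge> 5" using d_prime[OF n] by blast
  have p: "Factorial_Ring.prime ?p" using d_prime[OF n] by blast
  have rr: "0 < r n" "r n < d n" using r_pos[OF n] rd[OF n] by linarith+
  have K: "cycle_of_list [?Q 0, ?Q 1, ?Q (?p - 3)] \<in> MM n" by (rule t_in_MM[OF n D])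
  fix \<sigma> assume "\<sigma> \<in> three_cycles (d n)"
  then obtain cs where cs: "\<sigma> = cycle_of_list cs" "distinct cs" "length cs = 3" "set cs \<subseteq> {1..d n}" by blast
  obtain a b c where abc: "cs = [a,b,c]" using stupid_lemma[OF cs(3)] by blast
  have "cycle_of_list [a,b,c] \<in> MM n"
  proof (rule all3[where A="{1..?p}" and xa="?Q 0" and xb="?Q 1"])
    show "\<And>\<sigma> \<tau>. \<sigma> \<in> MM n \<Longrightarrow> \<tau> \<in> MM n \<Longrightarrow> \<sigma> \<circ> \<tau> \<in> MM n" by (rule MM_comp)
    show "?Q 0 \<in> {1..?p}" "?Q 1 \<in> {1..?p}" using Q_in[OF n] by auto
    show "?Q 0 \<noteq> ?Q 1" using Qp_distinct[OF n] p5 by auto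
    show "cycle_of_list [?Q 0, ?Q 1, k] \<in> MM n" if kk: "k \<in> {1..?p}" "k \<noteq> ?Q 0" "k \<noteq> ?Q 1" for k
    proof -
      obtain v where v: "v < ?p" "?Q v = k" using Qp_surj[OF p rr kk(1)] by blast
      have "v \<noteq> 0"
      proof
        assume "v = 0" then show False using v(2) kk(2) by simp
      qed
      moreover have "v \<noteq> 1"
      proof
        assume "v = 1" then show False using v(2) kk(3) by simp
      qed
      ultimately have "2 \<le> v" by simp
      then show ?thesis using G0[OF n K \<open>2 \<le> v\<close> v(1)] v(2) by simp
    qed
    show "\<exists>x\<in>{1..?p}. x \<noteq> ?Q 0 \<and> x \<noteq> a' \<and> x \<noteq> b' \<and> x \<noteq> c'" for a' b' c'
    proof (rule ccontr)
      assume "\<not> ?thesis"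
      then have "{1..?p} \<subseteq> {?Q 0, a', b', c'}" by auto
      then have "card {1..?p} \<le> card {?Q 0, a', b', c'}" by (intro card_mono) auto
      also have "\<dots> \<le> 4" using card_length[of "[?Q 0, a', b', c']"] by simp
      finally show False using p5 by simp
    qed
  qed (use cs abc in auto)
  then show "\<sigma> \<in> MM n" using cs abc by simp
qed

lemma En_one: "En n id = \<one>\<^bsub>PA\<^esub>"
  by (simp add: En_def PA_one)

lemma En_LL: "n \<ge> 1 \<Longrightarrow> \<sigma> \<in> carrier (alt_group (d n)) \<Longrightarrow> En n \<sigma> \<in> LL"
proof (induction n arbitrary: \<sigma> rule: less_induct)
  case (less n)
  have n: "n \<ge> 1" by (rule less.prems(1))
  have D: "Dn n \<in> MM n" by (rule D_in_MM[OF n]) (use less.IH in auto)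
  have T: "three_cycles (d n) \<subseteq> MM n" by (rule three_cycles_MM[OF n D])
  have "\<sigma> \<in> generate (alt_group (d n)) (three_cycles (d n))"
    using less.prems(2) alt_group_carrier_as_three_cycles by blast
  then have "\<sigma> \<in> MM n"
  proof (induction rule: generate.induct)
    case one
    show ?case unfolding MM_def alt_group_one mem_Collect_eq En_one by (rule LL_one)
  next
    case (incl h) then show ?case using T by blast
  next
    case (inv h)
    then obtain cs where cs: "h = cycle_of_list cs" "distinct cs" "length cs = 3" "set cs \<subseteq> {1..d n}" by blast
    obtain a b c where abc: "cs = [a,b,c]" using stupid_lemma[OF cs(3)] by blast
    have hc: "h \<in> carrier (alt_group (d n))" using inv three_cycles_incl by blast
    have "inv\<^bsub>alt_group (d n)\<^esub> h = cycle_of_list [a,c,b]"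
      using alt_group_inv_equality[OF hc] cyc3_inv cs abc by simp
    moreover have "cycle_of_list [a,c,b] \<in> three_cycles (d n)" using cs abc
      by (intro CollectI exI[where x="[a,c,b]"]) auto
    ultimately show ?case using T by auto
  next
    case (eng h1 h2)
    show ?case unfolding alt_group_mult by (rule MM_comp[OF eng(3) eng(4)])
  qed
  then show ?case by (simp add: MM_def)
qed

lemma sum_sub_LL: "carrier (sum_alt d) \<subseteq> LL"
proof
  fix x assume "x \<in> carrier (sum_alt d)"
  then have x: "x \<in> carrier PA" "finite {n \<in> posnat. x n \<noteq> id}" by (auto simp: sum_carrier)
  show "x \<in> LL"
  proof (rule fin_supp_LL[OF x(2)])
    show "{n \<in> posnat. x n \<noteq> id} \<subseteq> posnat" by auto
    show "\<And>i \<sigma>. i \<in> {n \<in> posnat. x n \<noteq> id} \<Longrightarrow> \<sigma> \<in> carrier (alt_group (d i)) \<Longrightarrow> En i \<sigma> \<in> LL"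
      using En_LL by auto
  qed (use x in auto)
qed

end

theorem proposition3p5:
  fixes d r :: "nat \<Rightarrow> nat"
  assumes d_mono: "mono_on posnat d"
    and d_prime: "\<And>n. n \<ge> 1 \<Longrightarrow> Factorial_Ring.prime (d n) \<and> d n \<ge> 5"
    and r_pos: "\<And>n. n \<ge> 1 \<Longrightarrow> r n \<ge> 1"
    and r_mono: "strict_mono_on posnat r"
    and rd: "\<And>n. n \<ge> 1 \<Longrightarrow> 3 * r n \<le> d n"
  defines "G \<equiv> subgroup_generated (prod_alt d) {alpha_seq d, beta_seq r}"
  shows "\<exists>\<tau>. \<tau> \<in> epi G lamplighter3
            \<and> \<tau> (alpha_seq d) = lamp_a \<and> \<tau> (beta_seq r) = lamp_b 0
            \<and> kernel G lamplighter3 \<tau> = carrier (sum_alt d)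
            \<and> carrier (sum_alt d) \<subseteq> carrier G
            \<and> kernel G lamplighter3 \<tau> \<subseteq> normal_closure G {beta_seq r}"
proof -
  interpret L: lampctx d r
    by (unfold_locales) (use d_prime r_pos r_mono rd in auto)
  have sub: "carrier (sum_alt d) \<subseteq> carrier G"
    using L.sum_sub_LL L.LL_sub unfolding G_def by blast
  have ker: "kernel G lamplighter3 L.tau = carrier (sum_alt d)"
    using L.kernel_eq sub unfolding G_def by blast
  show ?thesis
  proof (intro exI conjI)
    show "L.tau \<in> epi G lamplighter3" unfolding G_def by (rule L.tau_epi)
    show "L.tau (alpha_seq d) = lamp_a" by (rule L.tau_alpha)
    show "L.tau (beta_seq r) = lamp_b 0" by (rule L.tau_beta)
    show "kernel G lamplighter3 L.tau = carrier (sum_alt d)" by (rule ker)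
    show "carrier (sum_alt d) \<subseteq> carrier G" by (rule sub)
    show "kernel G lamplighter3 L.tau \<subseteq> normal_closure G {beta_seq r}"
      using ker L.sum_sub_LL unfolding L.LL_def G_def by simp
  qed
qed


end
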